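(* Fix $c\in\mathbb{N}_0$ and, for $n\in\mathbb{N}$, let $A_n=\mathbb{K}[x_i^2,x_ix_{i+1},\dots,x_ix_{i+c}: i\in[n]]\subseteq R_n=\mathbb{K}[x_1,\dots,x_{n+c}]$, graded by $[A_n]_d=A_n\cap[R_n]_{2d}$. Then the equivariant Hilbert series $\operatorname{equivH}_{\mathcal{A}}(s,t)=\sum_{n\ge1}\sum_{d\ge0}\dim_{\mathbb{K}}[A_n]_d\,t^ds^n$ of the family $\mathcal{A}=(A_n)_{n\in\mathbb{N}}$ is a rational function.
   Context: $\mathbb{K}$ is a field; $R_n$ is standard graded; $[n]=\{1,\dots,n\}$. *)

theory Defs
  imports "HOL-Library.Poly_Mapping" "HOL-Analysis.Analysis"
begin

type_synonym 'k mpoly = "(nat \<Rightarrow>\<^sub>0 nat) \<Rightarrow>\<^sub>0 'k"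

definition mvar :: "nat \<Rightarrow> 'k::field mpoly" where
  "mvar i = Poly_Mapping.single (Poly_Mapping.single i 1) 1"

definition mscale :: "'k::field \<Rightarrow> 'k mpoly \<Rightarrow> 'k mpoly" where
  "mscale a p = Poly_Mapping.map (\<lambda>x. a * x) p"

definition mon_deg :: "(nat \<Rightarrow>\<^sub>0 nat) \<Rightarrow> nat" where
  "mon_deg m = (\<Sum>i\<in>Poly_Mapping.keys m. Poly_Mapping.lookup m i)"

definition homogeneous :: "nat \<Rightarrow> 'k::field mpoly \<Rightarrow> bool" where
  "homogeneous e p \<longleftrightarrow> (\<forall>m\<in>Poly_Mapping.keys p. mon_deg m = e)"

definition gensA :: "nat \<Rightarrow> nat \<Rightarrow> 'k::field mpoly set" where
  "gensA c n = {mvar i * mvar j | i j. 1 \<le> i \<and> i \<le> n \<and> i \<le> j \<and> j \<le> i + c}"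

inductive_set subalg :: "'k::field mpoly set \<Rightarrow> 'k mpoly set" for G where
  gen: "g \<in> G \<Longrightarrow> g \<in> subalg G"
| one: "1 \<in> subalg G"
| add: "p \<in> subalg G \<Longrightarrow> q \<in> subalg G \<Longrightarrow> p + q \<in> subalg G"
| mult: "p \<in> subalg G \<Longrightarrow> q \<in> subalg G \<Longrightarrow> p * q \<in> subalg G"
| smult: "p \<in> subalg G \<Longrightarrow> mscale a p \<in> subalg G"

definition algA :: "nat \<Rightarrow> nat \<Rightarrow> 'k::field mpoly set" where
  "algA c n = subalg (gensA c n)"

definition gradedA :: "nat \<Rightarrow> nat \<Rightarrow> nat \<Rightarrow> 'k::field mpoly set" where
  "gradedA c n d = {p \<in> algA c n. homogeneous (2 * d) p}"

definition dimK :: "'k::field mpoly set \<Rightarrow> nat" where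
  "dimK V = vector_space.dim mscale V"

text \<open>A bivariate formal power series with coefficients H n d (of s^n t^d) is rational:
  there are polynomials P, Q in Q[s,t], Q \<noteq> 0, with Q * H = P in Q[[s,t]].\<close>
definition rational_bivariate :: "(nat \<Rightarrow> nat \<Rightarrow> rat) \<Rightarrow> bool" where
  "rational_bivariate H \<longleftrightarrow> (\<exists>(P::nat \<Rightarrow> nat \<Rightarrow> rat) (Q::nat \<Rightarrow> nat \<Rightarrow> rat) N.
      (\<forall>i j. (N < i \<or> N < j) \<longrightarrow> P i j = 0 \<and> Q i j = 0) \<and>
      (\<exists>i j. Q i j \<noteq> 0) \<and>
      (\<forall>n d. (\<Sum>i\<le>n. \<Sum>j\<le>d. Q i j * H (n - i) (d - j)) = P n d))"

end

theory Submission
  imports Defs "HOL-Library.Multiset" "HOL-Computational_Algebra.Polynomial_FPS"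
begin

lemma lookup_mscale[simp]: "Poly_Mapping.lookup (mscale a p) k = a * Poly_Mapping.lookup p k"
  by (simp add: mscale_def Poly_Mapping.map.rep_eq when_def)

interpretation vs: vector_space "mscale :: 'k::field \<Rightarrow> 'k mpoly \<Rightarrow> 'k mpoly"
  by unfold_locales (auto intro!: poly_mapping_eqI simp: lookup_add algebra_simps)

lemma keys_mscale: "Poly_Mapping.keys (mscale a p) \<subseteq> Poly_Mapping.keys p"
  by (auto simp: in_keys_iff)

lemma poly_sum_monomials: "p = (\<Sum>m\<in>Poly_Mapping.keys p. mscale (Poly_Mapping.lookup p m) (Poly_Mapping.single m (1::'k::field)))"
proof (rule poly_mapping_eqI)
  fix k
  have "Poly_Mapping.lookup (\<Sum>m\<in>Poly_Mapping.keys p. mscale (Poly_Mapping.lookup p m) (Poly_Mapping.single m (1::'k))) k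
      = (\<Sum>m\<in>Poly_Mapping.keys p. Poly_Mapping.lookup p m * (1 when m = k))"
    by (simp add: lookup_sum lookup_single)
  also have "\<dots> = Poly_Mapping.lookup p k"
    by (cases "k \<in> Poly_Mapping.keys p") (auto simp: when_def in_keys_iff if_distrib sum.delta cong: if_cong)
  finally show "Poly_Mapping.lookup p k = Poly_Mapping.lookup (\<Sum>m\<in>Poly_Mapping.keys p. mscale (Poly_Mapping.lookup p m) (Poly_Mapping.single m (1::'k))) k" by simp
qed

definition dimset :: "(nat \<Rightarrow>\<^sub>0 nat) set \<Rightarrow> 'k::field mpoly set" where
  "dimset S = {p. Poly_Mapping.keys p \<subseteq> S}"

lemma dim_dimset:
  assumes "finite S"
  shows "dimK (dimset S :: 'k::field mpoly set) = card S"
proof -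
  let ?B = "(\<lambda>m. Poly_Mapping.single m (1::'k)) ` S"
  have inj: "inj_on (\<lambda>m. Poly_Mapping.single m (1::'k)) S"
    by (auto intro!: inj_onI dest: arg_cong[where f=Poly_Mapping.keys])
  have "vs.dim (dimset S :: 'k mpoly set) = card S"
  proof (rule vs.dim_unique[of ?B])
    show "?B \<subseteq> dimset S" by (auto simp: dimset_def)
    show "dimset S \<subseteq> vs.span ?B"
    proof
      fix p :: "'k mpoly" assume "p \<in> dimset S"
      then have kp: "Poly_Mapping.keys p \<subseteq> S" by (simp add: dimset_def)
      have "(\<Sum>m\<in>Poly_Mapping.keys p. mscale (Poly_Mapping.lookup p m) (Poly_Mapping.single m (1::'k))) \<in> vs.span ?B"
        by (intro vs.span_sum vs.span_scale vs.span_base) (use kp in auto)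
      then show "p \<in> vs.span ?B" using poly_sum_monomials[of p] by simp
    qed
    show "vs.independent ?B"
      unfolding vs.independent_explicit_module
    proof (intro allI impI)
      fix t u v assume t: "finite t" "t \<subseteq> ?B" and s: "(\<Sum>v\<in>t. mscale (u v) v) = (0::'k mpoly)" and v: "v \<in> t"
      from v t obtain m where vm: "v = Poly_Mapping.single m 1" by auto
      have "0 = Poly_Mapping.lookup (\<Sum>v\<in>t. mscale (u v) v) m" using s by simp
      also have "\<dots> = (\<Sum>w\<in>t. u w * Poly_Mapping.lookup w m)" by (simp add: lookup_sum)
      also have "\<dots> = u v * Poly_Mapping.lookup v m"
      proof (rule sum.remove[OF t(1) v, THEN trans])
        have "\<forall>w\<in>t - {v}. Poly_Mapping.lookup w m = 0"
        proof
          fix w assume w: "w \<in> t - {v}"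
          then obtain m' where "w = Poly_Mapping.single m' 1" using t by auto
          with w vm have "m' \<noteq> m" by auto
          then show "Poly_Mapping.lookup w m = 0" using \<open>w = _\<close> by (simp add: lookup_single)
        qed
        then show "u v * Poly_Mapping.lookup v m + (\<Sum>w\<in>t - {v}. u w * Poly_Mapping.lookup w m) = u v * Poly_Mapping.lookup v m" by simp
      qed
      finally show "u v = 0" using vm by simp
    qed
    show "card ?B = card S" using card_image[OF inj] .
  qed
  then show ?thesis by (simp add: dimK_def)
qed

definition gexp :: "nat \<times> nat \<Rightarrow> (nat \<Rightarrow>\<^sub>0 nat)" where
  "gexp p = Poly_Mapping.single (fst p) 1 + Poly_Mapping.single (snd p) 1"

definition validp :: "nat \<Rightarrow> nat \<Rightarrow> nat \<times> nat \<Rightarrow> bool" where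
  "validp c n p \<longleftrightarrow> 1 \<le> fst p \<and> fst p \<le> n \<and> fst p \<le> snd p \<and> snd p \<le> fst p + c"

definition pv :: "(nat \<times> nat) multiset \<Rightarrow> (nat \<Rightarrow>\<^sub>0 nat)" where
  "pv P = sum_mset (image_mset gexp P)"

definition MonSet :: "nat \<Rightarrow> nat \<Rightarrow> (nat \<Rightarrow>\<^sub>0 nat) set" where
  "MonSet c n = {pv P | P. \<forall>p\<in>#P. validp c n p}"

lemma pv_empty[simp]: "pv {#} = 0" by (simp add: pv_def)
lemma pv_add_mset[simp]: "pv (add_mset p P) = gexp p + pv P" by (simp add: pv_def)
lemma pv_union[simp]: "pv (P + Q) = pv P + pv Q" by (simp add: pv_def)

lemma MonSet_add: "a \<in> MonSet c n \<Longrightarrow> b \<in> MonSet c n \<Longrightarrow> a + b \<in> MonSet c n"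
proof -
  assume "a \<in> MonSet c n" "b \<in> MonSet c n"
  then obtain P Q where "a = pv P" "\<forall>p\<in>#P. validp c n p" "b = pv Q" "\<forall>p\<in>#Q. validp c n p"
    unfolding MonSet_def by blast
  then show ?thesis unfolding MonSet_def by (auto intro!: exI[where x="P + Q"])
qed

lemma mvar_mult: "mvar i * mvar j = (Poly_Mapping.single (gexp (i,j)) 1 :: 'k::field mpoly)"
  by (simp add: mvar_def mult_single gexp_def)

lemma subalg_sub: "p \<in> subalg (gensA c n) \<Longrightarrow> Poly_Mapping.keys (p :: 'k::field mpoly) \<subseteq> MonSet c n"
proof (induction rule: subalg.induct)
  case (gen g)
  then obtain i j where g: "g = mvar i * mvar j" "validp c n (i,j)"
    by (auto simp: gensA_def validp_def)
  have "gexp (i,j) = pv {#(i,j)#}" by simp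
  then have "gexp (i,j) \<in> MonSet c n" using g(2) unfolding MonSet_def by fastforce
  then show ?case using g(1) by (simp add: mvar_mult)
next
  case one
  have "(0::nat\<Rightarrow>\<^sub>0nat) \<in> MonSet c n" unfolding MonSet_def by (auto intro!: exI[where x="{#}"])
  then show ?case by simp
next
  case (add p q)
  then show ?case using keys_add[of p q] by blast
next
  case (mult p q)
  then show ?case using keys_mult[of p q] MonSet_add by blast
next
  case (smult p a)
  then show ?case using keys_mscale by blast
qed

lemma single_in_subalg:
  assumes "\<forall>p\<in>#P. validp c n p"
  shows "(Poly_Mapping.single (pv P) 1 :: 'k::field mpoly) \<in> subalg (gensA c n)"
  using assms
proof (induction P)
  case empty
  then show ?case by (simp add: subalg.one)
next
  case (add p P)
  obtain i j where p: "p = (i,j)" by force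
  have g: "mvar i * mvar j \<in> (gensA c n :: 'k mpoly set)"
    using add.prems p by (auto simp: gensA_def validp_def)
  have "(Poly_Mapping.single (pv (add_mset p P)) 1 :: 'k mpoly) = (mvar i * mvar j) * Poly_Mapping.single (pv P) 1"
    by (simp add: mvar_mult mult_single p)
  then show ?case using add g by (auto intro: subalg.mult subalg.gen)
qed

lemma subalg_zero: "0 \<in> subalg G"
proof -
  have "mscale 0 1 \<in> subalg G" by (intro subalg.smult subalg.one)
  moreover have "mscale 0 (1::'a::field mpoly) = 0" by (intro poly_mapping_eqI) simp
  ultimately show ?thesis by simp
qed

lemma subalg_sum: "finite A \<Longrightarrow> (\<And>x. x \<in> A \<Longrightarrow> f x \<in> subalg G) \<Longrightarrow> sum f A \<in> subalg G"
  by (induction A rule: finite_induct) (auto intro: subalg_zero subalg.add)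

lemma subalg_eq: "subalg (gensA c n) = (dimset (MonSet c n) :: 'k::field mpoly set)"
proof
  show "subalg (gensA c n) \<subseteq> (dimset (MonSet c n) :: 'k::field mpoly set)"
    using subalg_sub unfolding dimset_def by blast
next
  show "(dimset (MonSet c n) :: 'k::field mpoly set) \<subseteq> subalg (gensA c n)"
  proof
    fix p :: "'k mpoly" assume "p \<in> dimset (MonSet c n)"
    then have kp: "Poly_Mapping.keys p \<subseteq> MonSet c n" by (simp add: dimset_def)
    have "(\<Sum>m\<in>Poly_Mapping.keys p. mscale (Poly_Mapping.lookup p m) (Poly_Mapping.single m (1::'k))) \<in> subalg (gensA c n)"
    proof (intro subalg_sum subalg.smult)
      fix m assume "m \<in> Poly_Mapping.keys p"
      then obtain P where "m = pv P" "\<forall>p\<in>#P. validp c n p" using kp unfolding MonSet_def by blast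
      then show "Poly_Mapping.single m 1 \<in> subalg (gensA c n)" using single_in_subalg by blast
    qed simp
    then show "p \<in> subalg (gensA c n)" using poly_sum_monomials[of p] by simp
  qed
qed

lemma mon_deg_sum: "finite S \<Longrightarrow> Poly_Mapping.keys m \<subseteq> S \<Longrightarrow> mon_deg m = (\<Sum>i\<in>S. Poly_Mapping.lookup m i)"
  unfolding mon_deg_def by (rule sum.mono_neutral_left) (auto simp: in_keys_iff)

lemma mon_deg_add: "mon_deg (a + b) = mon_deg a + mon_deg b"
proof -
  let ?S = "Poly_Mapping.keys a \<union> Poly_Mapping.keys b"
  have "mon_deg (a + b) = (\<Sum>i\<in>?S. Poly_Mapping.lookup (a+b) i)"
    using keys_add[of a b] by (intro mon_deg_sum) auto
  also have "\<dots> = (\<Sum>i\<in>?S. Poly_Mapping.lookup a i) + (\<Sum>i\<in>?S. Poly_Mapping.lookup b i)"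
    by (simp add: lookup_add sum.distrib)
  also have "\<dots> = mon_deg a + mon_deg b"
    by (subst (1 2) mon_deg_sum[of ?S]) auto
  finally show ?thesis .
qed

lemma mon_deg_single: "mon_deg (Poly_Mapping.single i 1) = 1"
  by (simp add: mon_deg_def)

lemma mon_deg_zero: "mon_deg 0 = 0"
  by (simp add: mon_deg_def)

lemma mon_deg_pv: "mon_deg (pv P) = 2 * size P"
  by (induction P) (auto simp: mon_deg_add mon_deg_zero gexp_def mon_deg_single[simplified])

definition MS :: "nat \<Rightarrow> nat \<Rightarrow> nat \<Rightarrow> (nat \<Rightarrow>\<^sub>0 nat) set" where
  "MS c n d = {pv P | P. (\<forall>p\<in>#P. validp c n p) \<and> size P = d}"

lemma gradedA_eq: "gradedA c n d = (dimset (MS c n d) :: 'k::field mpoly set)"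
proof -
  have "MS c n d = {m \<in> MonSet c n. mon_deg m = 2 * d}"
    unfolding MS_def MonSet_def by (auto simp: mon_deg_pv)
  then show ?thesis
    unfolding gradedA_def algA_def subalg_eq dimset_def homogeneous_def by auto
qed

lemma dimK_gradedA: "finite (MS c n d) \<Longrightarrow> dimK (gradedA c n d :: 'k::field mpoly set) = card (MS c n d)"
  by (simp add: gradedA_eq dim_dimset)


lemma lookup_pv: "Poly_Mapping.lookup (pv R) x = count (image_mset fst R) x + count (image_mset snd R) x"
  by (induction R) (auto simp: gexp_def lookup_add lookup_single when_def)

lemma keys_pv: "x \<in> Poly_Mapping.keys (pv R) \<longleftrightarrow> (\<exists>p\<in>#R. x = fst p \<or> x = snd p)"
  by (auto simp: in_keys_iff lookup_pv)

lemma gexp_swap: "gexp (a,b) + gexp (a',b') = gexp (a,b') + gexp (a',b)"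
  by (simp add: gexp_def ac_simps)

lemma gexp_swap2: "gexp (a,b) + gexp (a',b') = gexp (a,a') + gexp (b,b')"
  by (simp add: gexp_def ac_simps)

lemma gexp_comm: "gexp (a,b) = gexp (b,a)"
  by (simp add: gexp_def ac_simps)

lemma remove2:
  assumes "p0 \<in># P" "q0 \<in># P" "p0 \<noteq> q0"
  shows "P = add_mset p0 (add_mset q0 (P - {#p0#} - {#q0#}))"
proof -
  have "q0 \<in># P - {#p0#}" using assms by (simp add: in_diff_count)
  then show ?thesis using assms
    by (metis insert_DiffM)
qed

lemma exchangeB:
  assumes P: "\<forall>p\<in>#P. validp c n p \<and> n < snd p" and ne: "P \<noteq> {#}"
  shows "\<exists>h1 t1 R. pv P = gexp (h1,t1) + pv R \<and> size R = size P - 1 \<and>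
     (\<forall>p\<in>#R. validp c n p \<and> n < snd p) \<and> 1 \<le> h1 \<and> h1 \<le> n \<and> n < t1 \<and> t1 \<le> h1 + c \<and>
     (\<forall>p\<in>#R. h1 \<le> fst p \<and> t1 \<le> snd p)"
proof -
  define h1 where "h1 = Min (fst ` set_mset P)"
  define t1 where "t1 = Min (snd ` set_mset P)"
  have fin: "finite (set_mset P)" by simp
  have h1in: "h1 \<in> fst ` set_mset P" unfolding h1_def using ne by (intro Min_in) auto
  have t1in: "t1 \<in> snd ` set_mset P" unfolding t1_def using ne by (intro Min_in) auto
  have h1le: "\<And>p. p \<in># P \<Longrightarrow> h1 \<le> fst p" unfolding h1_def by auto
  have t1le: "\<And>p. p \<in># P \<Longrightarrow> t1 \<le> snd p" unfolding t1_def by auto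
  obtain w where p0: "(h1, w) \<in># P" using h1in by force
  obtain u where q0: "(u, t1) \<in># P" using t1in by force
  have vp0: "validp c n (h1,w)" "n < w" using P p0 by auto
  have vq0: "validp c n (u,t1)" "n < t1" using P q0 by auto
  show ?thesis
  proof (cases "w = t1")
    case True
    let ?R = "P - {#(h1,w)#}"
    have "pv P = gexp (h1,t1) + pv ?R" using p0 True by (metis insert_DiffM pv_add_mset)
    moreover have "size ?R = size P - 1" using p0 by (simp add: size_Diff_submset)
    moreover have "\<forall>p\<in>#?R. validp c n p \<and> n < snd p" using P by (auto dest: in_diffD)
    moreover have "\<forall>p\<in>#?R. h1 \<le> fst p \<and> t1 \<le> snd p" using h1le t1le by (auto dest: in_diffD)
    moreover have "1 \<le> h1 \<and> h1 \<le> n \<and> n < t1 \<and> t1 \<le> h1 + c" using vp0 True by (auto simp: validp_def)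
    ultimately show ?thesis by blast
  next
    case False
    then have ne2: "(h1,w) \<noteq> (u,t1)" by auto
    let ?Rz = "P - {#(h1,w)#} - {#(u,t1)#}"
    let ?R = "add_mset (u,w) ?Rz"
    have Pe: "P = add_mset (h1,w) (add_mset (u,t1) ?Rz)" using remove2[OF p0 q0 ne2] .
    have "pv P = gexp (h1,w) + gexp (u,t1) + pv ?Rz" using arg_cong[OF Pe, of pv] by (simp only: pv_add_mset add.assoc)
    also have "\<dots> = gexp (h1,t1) + pv ?R" using gexp_swap[of h1 w u t1] by (simp add: ac_simps)
    finally have e1: "pv P = gexp (h1,t1) + pv ?R" .
    have "size P = Suc (Suc (size ?Rz))" using arg_cong[OF Pe, of size] by (simp only: size_add_mset)
    then have sz: "size ?R = size P - 1" by (simp only: size_add_mset)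
    have inR0: "\<And>p. p \<in># ?Rz \<Longrightarrow> p \<in># P" by (auto dest: in_diffD)
    have "h1 \<le> u" using h1le q0 by force
    have "t1 \<le> w" using t1le p0 by force
    have vuw: "validp c n (u,w) \<and> n < snd (u,w)" using vp0 vq0 \<open>h1 \<le> u\<close> by (auto simp: validp_def)
    have "\<forall>p\<in>#?R. validp c n p \<and> n < snd p"
    proof
      fix p assume "p \<in># ?R"
      then have "p = (u,w) \<or> p \<in># ?Rz" by (simp only: set_mset_add_mset_insert insert_iff)
      then show "validp c n p \<and> n < snd p" using P inR0 vuw by blast
    qed
    moreover have "\<forall>p\<in>#?R. h1 \<le> fst p \<and> t1 \<le> snd p"
    proof
      fix p assume "p \<in># ?R"
      then have "p = (u,w) \<or> p \<in># ?Rz" by (simp only: set_mset_add_mset_insert insert_iff)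
      then show "h1 \<le> fst p \<and> t1 \<le> snd p"
      proof
        assume "p \<in># ?Rz"
        then have "p \<in># P" by (rule inR0)
        then show ?thesis using h1le t1le by blast
      qed (use \<open>h1 \<le> u\<close> \<open>t1 \<le> w\<close> in simp)
    qed
    moreover have "1 \<le> h1 \<and> h1 \<le> n \<and> n < t1 \<and> t1 \<le> h1 + c" using vp0 vq0 \<open>t1 \<le> w\<close> by (auto simp: validp_def)
    ultimately show ?thesis using e1 sz by blast
  qed
qed

lemma mem_diff_ne: "r \<in># P \<Longrightarrow> r \<noteq> p \<Longrightarrow> r \<in># P - {#p#}"
  by (simp add: in_diff_count)

lemma exchangeA:
  assumes P: "\<forall>p\<in>#P. validp c n p" and hh: "\<exists>p\<in>#P. snd p \<le> n"
  shows "\<exists>z1 z2 R. pv P = gexp (z1,z2) + pv R \<and> size R = size P - 1 \<and>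
     (\<forall>p\<in>#R. validp c n p) \<and> 1 \<le> z1 \<and> z1 \<le> z2 \<and> z2 \<le> z1 + c \<and> z2 \<le> n \<and>
     (\<forall>p\<in>#R. z2 \<le> fst p)"
proof -
  have ne: "P \<noteq> {#}" using hh by auto
  define z1 where "z1 = Min (fst ` set_mset P)"
  have z1in: "z1 \<in> fst ` set_mset P" unfolding z1_def using ne by (intro Min_in) auto
  have z1le: "\<And>p. p \<in># P \<Longrightarrow> z1 \<le> fst p" unfolding z1_def by auto
  obtain w where p0: "(z1, w) \<in># P" using z1in by force
  have vp0: "validp c n (z1,w)" using P p0 by auto
  obtain a b where r: "(a,b) \<in># P" "b \<le> n" using hh by force
  have vr: "validp c n (a,b)" using P r by auto
  define P1 where "P1 = P - {#(z1,w)#}"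
  have PP1: "P = add_mset (z1,w) P1" unfolding P1_def using p0 by simp
  have inP1: "\<And>p. p \<in># P1 \<Longrightarrow> p \<in># P" unfolding P1_def by (rule in_diffD)
  show ?thesis
  proof (cases "\<forall>p\<in>#P1. w \<le> fst p")
    case True
    have "w \<le> n"
    proof (cases "(a,b) = (z1,w)")
      case True then show ?thesis using r by simp
    next
      case False
      then have "(a,b) \<in># P1" unfolding P1_def using r by (intro mem_diff_ne)
      then have "w \<le> a" using \<open>\<forall>p\<in>#P1. w \<le> fst p\<close> by force
      then show ?thesis using vr r by (simp add: validp_def)
    qed
    moreover have "pv P = gexp (z1,w) + pv P1" using arg_cong[OF PP1, of pv] by (simp only: pv_add_mset)
    moreover have "size P1 = size P - 1" using arg_cong[OF PP1, of size] by (simp only: size_add_mset)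
    moreover have "\<forall>p\<in>#P1. validp c n p" using P inP1 by blast
    moreover have "1 \<le> z1 \<and> z1 \<le> w \<and> w \<le> z1 + c" using vp0 by (simp add: validp_def)
    ultimately show ?thesis using True by blast
  next
    case False
    then have ne1: "P1 \<noteq> {#}" by auto
    define u where "u = Min (fst ` set_mset P1)"
    have uin: "u \<in> fst ` set_mset P1" unfolding u_def using ne1 by (intro Min_in) auto
    have ule: "\<And>p. p \<in># P1 \<Longrightarrow> u \<le> fst p" unfolding u_def by auto
    have uw: "u < w" using False ule by (meson leI order_trans)
    obtain v where q0: "(u, v) \<in># P1" using uin by force
    have vq0: "validp c n (u,v)" using P inP1 q0 by blast
    have z1u: "z1 \<le> u" using z1le inP1 q0 by force
    define P2 where "P2 = P1 - {#(u,v)#}"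
    have P1P2: "P1 = add_mset (u,v) P2" unfolding P2_def using q0 by simp
    have inP2: "\<And>p. p \<in># P2 \<Longrightarrow> p \<in># P1" unfolding P2_def by (rule in_diffD)
    have Pe: "P = add_mset (z1,w) (add_mset (u,v) P2)" using PP1 P1P2 by simp
    have pvP: "pv P = gexp (z1,w) + gexp (u,v) + pv P2" using arg_cong[OF Pe, of pv] by (simp only: pv_add_mset add.assoc)
    have szP: "size P = Suc (Suc (size P2))" using arg_cong[OF Pe, of size] by (simp only: size_add_mset)
    have bounds: "1 \<le> z1" "w \<le> z1 + c" "u \<le> n" "v \<le> u + c" "u \<le> v" using vp0 vq0 by (auto simp: validp_def)
    show ?thesis
    proof (cases "min w v \<le> n")
      case True
      define R where "R = add_mset (min w v, max w v) P2"
      have "pv P = gexp (z1,u) + pv R"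
      proof -
        have "gexp (w,v) = gexp (min w v, max w v)" by (cases "w \<le> v") (auto simp: gexp_comm)
        then show ?thesis unfolding R_def pvP using gexp_swap2[of z1 w u v] by (simp add: ac_simps)
      qed
      moreover have "size R = size P - 1" unfolding R_def using szP by simp
      moreover have "\<forall>p\<in>#R. validp c n p"
      proof
        fix p assume "p \<in># R"
        then have "p = (min w v, max w v) \<or> p \<in># P2" unfolding R_def by (simp only: set_mset_add_mset_insert insert_iff)
        then show "validp c n p"
        proof
          assume "p \<in># P2" then show ?thesis using P inP1 inP2 by blast
        qed (use True uw bounds z1u in \<open>auto simp: validp_def\<close>)
      qed
      moreover have "\<forall>p\<in>#R. u \<le> fst p"
      proof
        fix p assume "p \<in># R"
        then have "p = (min w v, max w v) \<or> p \<in># P2" unfolding R_def by (simp only: set_mset_add_mset_insert insert_iff)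
        then show "u \<le> fst p"
        proof
          assume "p \<in># P2" then show ?thesis using ule inP2 by blast
        qed (use uw bounds in auto)
      qed
      moreover have "1 \<le> z1 \<and> z1 \<le> u \<and> u \<le> z1 + c \<and> u \<le> n" using bounds z1u uw by auto
      ultimately show ?thesis by blast
    next
      case False
      then have wn: "n < w" and vn: "n < v" by auto
      have "(a,b) \<noteq> (z1,w)" using r wn by auto
      then have "(a,b) \<in># P1" unfolding P1_def using r by (intro mem_diff_ne)
      moreover have "(a,b) \<noteq> (u,v)" using r vn by auto
      ultimately have r2: "(a,b) \<in># P2" unfolding P2_def by (intro mem_diff_ne)
      have ua: "u \<le> a" using ule inP2 r2 by force
      have z1a: "z1 \<le> a" using z1u ua by simp
      define P3 where "P3 = P2 - {#(a,b)#}"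
      have P2P3: "P2 = add_mset (a,b) P3" unfolding P3_def using r2 by simp
      have inP3: "\<And>p. p \<in># P3 \<Longrightarrow> p \<in># P2" unfolding P3_def by (rule in_diffD)
      define R where "R = add_mset (a, w) (add_mset (b, v) P3)"
      have "pv P = gexp (z1,u) + pv R"
      proof -
        have "pv P = gexp (z1,w) + gexp (u,v) + gexp (a,b) + pv P3" unfolding pvP P2P3 by (simp add: ac_simps)
        also have "\<dots> = gexp (z1,u) + gexp (a,w) + gexp (b,v) + pv P3" by (simp add: gexp_def ac_simps)
        finally show ?thesis unfolding R_def by (simp add: ac_simps)
      qed
      moreover have "size R = size P - 1" unfolding R_def using szP P2P3 by simp
      moreover have "\<forall>p\<in>#R. validp c n p"
      proof
        fix p assume "p \<in># R"
        then have "p = (a,w) \<or> p = (b,v) \<or> p \<in># P3" unfolding R_def by (simp only: set_mset_add_mset_insert insert_iff)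
        then show "validp c n p"
        proof (elim disjE)
          assume "p \<in># P3" then show ?thesis using P inP1 inP2 inP3 by blast
        qed (use wn vn bounds vr r ua z1a in \<open>auto simp: validp_def\<close>)
      qed
      moreover have "\<forall>p\<in>#R. u \<le> fst p"
      proof
        fix p assume "p \<in># R"
        then have "p = (a,w) \<or> p = (b,v) \<or> p \<in># P3" unfolding R_def by (simp only: set_mset_add_mset_insert insert_iff)
        then show "u \<le> fst p"
        proof (elim disjE)
          assume "p \<in># P3" then show ?thesis using ule inP2 inP3 by blast
        qed (use ua vr in \<open>auto simp: validp_def\<close>)
      qed
      moreover have "1 \<le> z1 \<and> z1 \<le> u \<and> u \<le> z1 + c \<and> u \<le> n" using bounds z1u uw by auto
      ultimately show ?thesis by blast
    qed
  qed
qed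

definition freeok :: "nat \<Rightarrow> (nat \<times> nat) list \<Rightarrow> bool" where
  "freeok c fl \<longleftrightarrow> sorted_wrt (\<lambda>p q. snd q \<le> fst p) fl \<and>
     (\<forall>p\<in>set fl. 1 \<le> fst p \<and> fst p \<le> snd p \<and> snd p \<le> fst p + c)"

definition chainok :: "nat \<Rightarrow> (nat \<times> nat) list \<Rightarrow> bool" where
  "chainok c cl \<longleftrightarrow> sorted_wrt (\<lambda>e e'. fst e' \<le> fst e \<and> snd e \<le> snd e') cl \<and>
     (\<forall>e\<in>set cl. 1 \<le> snd e \<and> fst e + snd e \<le> c)"

definition canon :: "nat \<Rightarrow> nat \<Rightarrow> (nat \<times> nat) list \<times> (nat \<times> nat) list \<Rightarrow> bool" where
  "canon c n S \<longleftrightarrow> freeok c (fst S) \<and> chainok c (snd S) \<and> (\<forall>p\<in>set (fst S). snd p \<le> n) \<and>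
     (\<forall>e\<in>set (snd S). fst e < n \<and> (\<forall>p\<in>set (fst S). snd p + fst e \<le> n))"

definition Canon :: "nat \<Rightarrow> nat \<Rightarrow> nat \<Rightarrow> ((nat \<times> nat) list \<times> (nat \<times> nat) list) set" where
  "Canon c n d = {S. canon c n S \<and> length (fst S) + length (snd S) = d}"

definition chpair :: "nat \<Rightarrow> nat \<times> nat \<Rightarrow> nat \<times> nat" where
  "chpair n e = (n - fst e, n + snd e)"

definition monoS :: "nat \<Rightarrow> (nat \<times> nat) list \<times> (nat \<times> nat) list \<Rightarrow> (nat \<Rightarrow>\<^sub>0 nat)" where
  "monoS n S = pv (mset (fst S)) + pv (mset (map (chpair n) (snd S)))"

lemma keys_pv_list: "p \<in> set L \<Longrightarrow> fst p \<in> Poly_Mapping.keys (pv (mset L)) \<and> snd p \<in> Poly_Mapping.keys (pv (mset L))"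
  by (auto simp: keys_pv)

lemma keys_mono: "x \<in> Poly_Mapping.keys (monoS n S) \<longleftrightarrow>
   (\<exists>p \<in> set (fst S) \<union> set (map (chpair n) (snd S)). x = fst p \<or> x = snd p)"
proof -
  have "monoS n S = pv (mset (fst S @ map (chpair n) (snd S)))" by (simp add: monoS_def)
  then show ?thesis by (simp only: keys_pv set_mset_mset set_append)
qed

lemma chainB:
  "\<forall>p\<in>#P. validp c n p \<and> n < snd p \<Longrightarrow> \<exists>cl. chainok c cl \<and> (\<forall>e\<in>set cl. fst e < n) \<and>
      length cl = size P \<and> pv (mset (map (chpair n) cl)) = pv P"
proof (induction "size P" arbitrary: P rule: less_induct)
  case less
  show ?case
  proof (cases "P = {#}")
    case True
    then show ?thesis by (auto simp: chainok_def intro!: exI[of _ "[]"])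
  next
    case False
    from exchangeB[OF less.prems False] obtain h1 t1 R where
      hR: "pv P = gexp (h1,t1) + pv R" "size R = size P - 1"
        "\<forall>p\<in>#R. validp c n p \<and> n < snd p" "1 \<le> h1" "h1 \<le> n" "n < t1" "t1 \<le> h1 + c"
        "\<forall>p\<in>#R. h1 \<le> fst p \<and> t1 \<le> snd p" by blast
    have "size R < size P" using hR(2) False by (simp add: nonempty_has_size)
    from less.hyps[OF this hR(3)] obtain cl' where cl': "chainok c cl'" "\<forall>e\<in>set cl'. fst e < n"
      "length cl' = size R" "pv (mset (map (chpair n) cl')) = pv R" by blast
    define e0 where "e0 = (n - h1, t1 - n)"
    have ch0: "chpair n e0 = (h1, t1)" unfolding e0_def chpair_def using hR by auto
    have keysR: "\<And>x. x \<in> Poly_Mapping.keys (pv R) \<Longrightarrow> h1 \<le> x \<and> (n < x \<longrightarrow> t1 \<le> x)"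
    proof -
      fix x assume "x \<in> Poly_Mapping.keys (pv R)"
      then obtain p where p: "p \<in># R" "x = fst p \<or> x = snd p" by (auto simp: keys_pv)
      have "validp c n p" "h1 \<le> fst p" "t1 \<le> snd p" using hR(3,8) p(1) by auto
      then show "h1 \<le> x \<and> (n < x \<longrightarrow> t1 \<le> x)" using p(2) by (auto simp: validp_def)
    qed
    have "chainok c (e0 # cl')"
      unfolding chainok_def
    proof (intro conjI)
      show "sorted_wrt (\<lambda>e e'. fst e' \<le> fst e \<and> snd e \<le> snd e') (e0 # cl')"
      unfolding sorted_wrt.simps
      proof (intro conjI)
        show "\<forall>e'\<in>set cl'. fst e' \<le> fst e0 \<and> snd e0 \<le> snd e'"
        proof
          fix e' assume e': "e' \<in> set cl'"
          have "chpair n e' \<in> set (map (chpair n) cl')" using e' by simp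
          from keys_pv_list[OF this] cl'(4) have k: "n - fst e' \<in> Poly_Mapping.keys (pv R)" "n + snd e' \<in> Poly_Mapping.keys (pv R)"
            by (auto simp: chpair_def)
          have "1 \<le> snd e'" using cl'(1) e' by (auto simp: chainok_def)
          then show "fst e' \<le> fst e0 \<and> snd e0 \<le> snd e'"
            using keysR[OF k(1)] keysR[OF k(2)] cl'(2) e' unfolding e0_def by auto
        qed
        show "sorted_wrt (\<lambda>e e'. fst e' \<le> fst e \<and> snd e \<le> snd e') cl'" using cl'(1) by (simp add: chainok_def)
      qed
      show "\<forall>e\<in>set (e0 # cl'). 1 \<le> snd e \<and> fst e + snd e \<le> c"
        using cl'(1) hR unfolding chainok_def e0_def by auto
    qed
    moreover have "\<forall>e\<in>set (e0 # cl'). fst e < n" using cl'(2) hR unfolding e0_def by auto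
    moreover have "length (e0 # cl') = size P" using cl'(3) hR(2) False by (simp add: nonempty_has_size)
    moreover have "pv (mset (map (chpair n) (e0 # cl'))) = pv P" using ch0 cl'(4) hR(1) by simp
    ultimately show ?thesis by blast
  qed
qed

lemma surj_canon:
  "\<forall>p\<in>#P. validp c n p \<Longrightarrow> \<exists>S. canon c n S \<and> length (fst S) + length (snd S) = size P \<and> monoS n S = pv P"
proof (induction "size P" arbitrary: P rule: less_induct)
  case less
  show ?case
  proof (cases "\<exists>p\<in>#P. snd p \<le> n")
    case False
    then have "\<forall>p\<in>#P. validp c n p \<and> n < snd p" using less.prems by auto
    from chainB[OF this] obtain cl where cl: "chainok c cl" "\<forall>e\<in>set cl. fst e < n"
      "length cl = size P" "pv (mset (map (chpair n) cl)) = pv P" by blast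
    have "canon c n ([], cl)" using cl by (simp add: canon_def freeok_def)
    moreover have "monoS n ([], cl) = pv P" using cl by (simp add: monoS_def)
    ultimately show ?thesis using cl(3) by (intro exI[of _ "([], cl)"]) simp
  next
    case True
    from exchangeA[OF less.prems True] obtain z1 z2 R where
      zR: "pv P = gexp (z1,z2) + pv R" "size R = size P - 1"
        "\<forall>p\<in>#R. validp c n p" "1 \<le> z1" "z1 \<le> z2" "z2 \<le> z1 + c" "z2 \<le> n"
        "\<forall>p\<in>#R. z2 \<le> fst p" by blast
    have ne: "P \<noteq> {#}" using True by auto
    have "size R < size P" using zR(2) ne by (simp add: nonempty_has_size)
    from less.hyps[OF this zR(3)] obtain S' where S': "canon c n S'"
      "length (fst S') + length (snd S') = size R" "monoS n S' = pv R" by blast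
    obtain fl cl where S'e: "S' = (fl, cl)" by force
    have keysR: "\<And>x. x \<in> Poly_Mapping.keys (monoS n S') \<Longrightarrow> z2 \<le> x"
    proof -
      fix x assume "x \<in> Poly_Mapping.keys (monoS n S')"
      then have "x \<in> Poly_Mapping.keys (pv R)" using S'(3) by simp
      then obtain p where p: "p \<in># R" "x = fst p \<or> x = snd p" by (auto simp: keys_pv)
      have "validp c n p" "z2 \<le> fst p" using zR(3,8) p(1) by auto
      then show "z2 \<le> x" using p(2) by (auto simp: validp_def)
    qed
    let ?S = "(fl @ [(z1,z2)], cl)"
    have can: "freeok c fl" "chainok c cl" "\<forall>p\<in>set fl. snd p \<le> n"
       "\<forall>e\<in>set cl. fst e < n \<and> (\<forall>p\<in>set fl. snd p + fst e \<le> n)"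
      using S'(1) S'e by (auto simp: canon_def)
    have "canon c n ?S"
      unfolding canon_def fst_conv snd_conv
    proof (intro conjI)
      show "freeok c (fl @ [(z1, z2)])"
        unfolding freeok_def sorted_wrt_append
      proof (intro conjI)
        show "sorted_wrt (\<lambda>p q. snd q \<le> fst p) fl" using can(1) by (simp add: freeok_def)
        show "sorted_wrt (\<lambda>p q. snd q \<le> fst p) [(z1, z2)]" by simp
        show "\<forall>x\<in>set fl. \<forall>y\<in>set [(z1, z2)]. snd y \<le> fst x"
        proof (intro ballI)
          fix x y assume x: "x \<in> set fl" and y: "y \<in> set [(z1,z2)]"
          have "fst x \<in> Poly_Mapping.keys (monoS n S')" unfolding keys_mono S'e using x by auto
          then show "snd y \<le> fst x" using keysR y by auto
        qed
        show "\<forall>p\<in>set (fl @ [(z1, z2)]). 1 \<le> fst p \<and> fst p \<le> snd p \<and> snd p \<le> fst p + c"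
          using can(1) zR by (auto simp: freeok_def)
      qed
      show "chainok c cl" by (rule can(2))
      show "\<forall>p\<in>set (fl @ [(z1, z2)]). snd p \<le> n" using can(3) zR(7) by auto
      show "\<forall>e\<in>set cl. fst e < n \<and> (\<forall>p\<in>set (fl @ [(z1, z2)]). snd p + fst e \<le> n)"
      proof
        fix e assume e: "e \<in> set cl"
        show "fst e < n \<and> (\<forall>p\<in>set (fl @ [(z1, z2)]). snd p + fst e \<le> n)"
        proof (intro conjI ballI)
          show "fst e < n" using can(4) e by auto
          fix p assume p: "p \<in> set (fl @ [(z1, z2)])"
          have "n - fst e \<in> Poly_Mapping.keys (monoS n S')" unfolding keys_mono S'e using e
            by (force simp: chpair_def)
          then have "z2 \<le> n - fst e" by (rule keysR)
          then show "snd p + fst e \<le> n" using p can(4) e by auto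
        qed
      qed
    qed
    moreover have "length (fst ?S) + length (snd ?S) = size P" using S'(2) S'e zR(2) ne
      by (simp add: nonempty_has_size)
    moreover have "monoS n ?S = pv P"
    proof -
      have "monoS n ?S = gexp (z1,z2) + monoS n S'" unfolding S'e by (simp add: monoS_def ac_simps)
      then show ?thesis using S'(3) zR(1) by simp
    qed
    ultimately show ?thesis by blast
  qed
qed

lemma canon_MS: "canon c n S \<Longrightarrow> monoS n S \<in> MS c n (length (fst S) + length (snd S))"
proof -
  assume can: "canon c n S"
  obtain fl cl where S: "S = (fl, cl)" by force
  let ?P = "mset fl + mset (map (chpair n) cl)"
  have "\<forall>p\<in>#?P. validp c n p"
  proof
    fix p assume "p \<in># ?P"
    then have "p \<in> set fl \<or> p \<in> set (map (chpair n) cl)" by simp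
    then show "validp c n p"
    proof
      assume p: "p \<in> set fl"
      then have "1 \<le> fst p \<and> fst p \<le> snd p \<and> snd p \<le> fst p + c" "snd p \<le> n"
        using can S by (auto simp: canon_def freeok_def)
      then show ?thesis by (auto simp: validp_def)
    next
      assume "p \<in> set (map (chpair n) cl)"
      then obtain e where e: "e \<in> set cl" "p = chpair n e" by auto
      have "fst e < n" "1 \<le> snd e" "fst e + snd e \<le> c" using can S e(1) by (auto simp: canon_def chainok_def)
      then show ?thesis using e(2) by (auto simp: validp_def chpair_def)
    qed
  qed
  moreover have "monoS n S = pv ?P" "size ?P = length (fst S) + length (snd S)" by (auto simp: monoS_def S)
  ultimately show ?thesis unfolding MS_def by blast
qed

lemma MS_eq: "MS c n d = monoS n ` Canon c n d"
proof
  show "MS c n d \<subseteq> monoS n ` Canon c n d"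
  proof
    fix m assume "m \<in> MS c n d"
    then obtain P where P: "m = pv P" "\<forall>p\<in>#P. validp c n p" "size P = d" unfolding MS_def by blast
    from surj_canon[OF P(2)] obtain S where "canon c n S" "length (fst S) + length (snd S) = size P" "monoS n S = pv P" by blast
    then show "m \<in> monoS n ` Canon c n d" using P unfolding Canon_def by force
  qed
  show "monoS n ` Canon c n d \<subseteq> MS c n d" using canon_MS unfolding Canon_def by fastforce
qed

fun pl :: "(nat \<times> nat) list \<Rightarrow> nat list" where
  "pl [] = []"
| "pl (p # ps) = fst p # snd p # pl ps"

lemma pl_append[simp]: "pl (xs @ ys) = pl xs @ pl ys" by (induction xs) auto
lemma length_pl[simp]: "length (pl xs) = 2 * length xs" by (induction xs) auto
lemma set_pl: "set (pl xs) = fst ` set xs \<union> snd ` set xs" by (induction xs) auto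
lemma count_pl: "count (mset (pl xs)) x = count (image_mset fst (mset xs)) x + count (image_mset snd (mset xs)) x"
  by (induction xs) auto
lemma pl_inj: "pl xs = pl ys \<Longrightarrow> xs = ys"
proof (induction xs arbitrary: ys)
  case Nil then show ?case by (cases ys) auto
next
  case (Cons p xs) then show ?case by (cases ys) (auto simp: prod_eq_iff)
qed

definition flat :: "nat \<Rightarrow> (nat \<times> nat) list \<times> (nat \<times> nat) list \<Rightarrow> nat list" where
  "flat n S = pl (rev (fst S)) @ map (\<lambda>e. n - fst e) (snd S) @ map (\<lambda>e. n + snd e) (snd S)"

lemma lookup_mono_count: "Poly_Mapping.lookup (monoS n S) x = count (mset (flat n S)) x"
  by (simp add: monoS_def flat_def lookup_add lookup_pv count_pl image_mset.compositionality o_def chpair_def)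

lemma sorted_pl_rev: "freeok c fl \<Longrightarrow> sorted (pl (rev fl))"
proof (induction fl)
  case Nil then show ?case by simp
next
  case (Cons p fl)
  have fo: "freeok c fl" using Cons.prems by (simp add: freeok_def)
  have all: "\<forall>q\<in>set fl. snd q \<le> fst p" "fst p \<le> snd p" "\<forall>q\<in>set fl. fst q \<le> snd q"
    using Cons.prems by (auto simp: freeok_def)
  have "\<forall>x\<in>set (pl (rev fl)). x \<le> fst p"
    using all by (force simp: set_pl)
  then show ?case using Cons.IH[OF fo] all(2) by (auto simp: sorted_append)
qed

lemma sorted_flat: "canon c n S \<Longrightarrow> sorted (flat n S)"
proof -
  assume can: "canon c n S"
  obtain fl cl where S: "S = (fl, cl)" by force
  have fo: "freeok c fl" and co: "chainok c cl" and b1: "\<forall>p\<in>set fl. snd p \<le> n"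
    and b2: "\<forall>e\<in>set cl. fst e < n \<and> (\<forall>p\<in>set fl. snd p + fst e \<le> n)" using can S by (auto simp: canon_def)
  have s1: "sorted (pl (rev fl))" by (rule sorted_pl_rev[OF fo])
  have sw: "sorted_wrt (\<lambda>e e'. fst e' \<le> fst e \<and> snd e \<le> snd e') cl" using co by (simp add: chainok_def)
  have s2: "sorted (map (\<lambda>e. n - fst e) cl)" unfolding sorted_map
    by (rule sorted_wrt_mono_rel[OF _ sw]) auto
  have s3: "sorted (map (\<lambda>e. n + snd e) cl)" unfolding sorted_map
    by (rule sorted_wrt_mono_rel[OF _ sw]) auto
  have fl_le: "\<forall>p\<in>set fl. fst p \<le> snd p" using fo by (auto simp: freeok_def)
  have c12: "\<forall>x\<in>set (pl (rev fl)). \<forall>y\<in>set (map (\<lambda>e. n - fst e) cl). x \<le> y"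
  proof (intro ballI)
    fix x y assume x: "x \<in> set (pl (rev fl))" and y: "y \<in> set (map (\<lambda>e. n - fst e) cl)"
    obtain p where p: "p \<in> set fl" "x = fst p \<or> x = snd p" using x by (auto simp: set_pl)
    obtain e where e: "e \<in> set cl" "y = n - fst e" using y by auto
    have "snd p + fst e \<le> n" "fst p \<le> snd p" using b2 fl_le p(1) e(1) by auto
    then show "x \<le> y" using p(2) e(2) by auto
  qed
  have c13: "\<forall>x\<in>set (pl (rev fl)). \<forall>y\<in>set (map (\<lambda>e. n + snd e) cl). x \<le> y"
  proof (intro ballI)
    fix x y assume x: "x \<in> set (pl (rev fl))" and y: "y \<in> set (map (\<lambda>e. n + snd e) cl)"
    obtain p where p: "p \<in> set fl" "x = fst p \<or> x = snd p" using x by (auto simp: set_pl)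
    obtain e where e: "e \<in> set cl" "y = n + snd e" using y by auto
    have "snd p \<le> n" "fst p \<le> snd p" using b1 fl_le p(1) by auto
    then show "x \<le> y" using p(2) e(2) by auto
  qed
  have c23: "\<forall>x\<in>set (map (\<lambda>e. n - fst e) cl). \<forall>y\<in>set (map (\<lambda>e. n + snd e) cl). x \<le> y"
    by auto
  let ?A = "pl (rev fl)" and ?B = "map (\<lambda>e. n - fst e) cl" and ?C = "map (\<lambda>e. n + snd e) cl"
  have sBC: "sorted (?B @ ?C)" using s2 s3 c23 by (simp only: sorted_append)
  have "\<forall>x\<in>set ?A. \<forall>y\<in>set (?B @ ?C). x \<le> y" using c12 c13 by (simp only: set_append) blast
  then have "sorted (?A @ ?B @ ?C)" using s1 sBC by (simp only: sorted_append[of ?A])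
  then show ?thesis unfolding S flat_def by simp
qed

lemma filter_flat: "canon c n S \<Longrightarrow> filter (\<lambda>x. n < x) (flat n S) = map (\<lambda>e. n + snd e) (snd S)"
proof -
  assume can: "canon c n S"
  obtain fl cl where S: "S = (fl, cl)" by force
  have fo: "freeok c fl" and co: "chainok c cl" and b1: "\<forall>p\<in>set fl. snd p \<le> n"
    using can S by (auto simp: canon_def)
  have fl_le: "\<forall>p\<in>set fl. fst p \<le> snd p" using fo by (auto simp: freeok_def)
  have "filter (\<lambda>x. n < x) (pl (rev fl)) = []"
    unfolding filter_empty_conv
  proof
    fix x assume x: "x \<in> set (pl (rev fl))"
    obtain p where p: "p \<in> set fl" "x = fst p \<or> x = snd p" using x by (auto simp: set_pl)
    have "snd p \<le> n" "fst p \<le> snd p" using b1 fl_le p(1) by auto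
    then show "\<not> n < x" using p(2) by auto
  qed
  moreover have "filter (\<lambda>x. n < x) (map (\<lambda>e. n - fst e) cl) = []" by (auto simp: filter_empty_conv)
  moreover have "filter (\<lambda>x. n < x) (map (\<lambda>e. n + snd e) cl) = map (\<lambda>e. n + snd e) cl"
    using co by (auto simp: chainok_def filter_id_conv)
  ultimately show ?thesis by (simp add: flat_def S)
qed

lemma mono_inj:
  assumes "canon c n S" "canon c n S'" "monoS n S = monoS n S'"
  shows "S = S'"
proof -
  obtain fl cl where S: "S = (fl, cl)" by force
  obtain fl' cl' where S': "S' = (fl', cl')" by force
  have "mset (flat n S) = mset (flat n S')"
    by (rule multiset_eqI) (metis lookup_mono_count assms(3))
  then have fe: "flat n S = flat n S'"
    using sorted_flat[OF assms(1)] sorted_flat[OF assms(2)] by (metis properties_for_sort)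
  have "length cl = length cl'"
    using arg_cong[OF fe, of "filter (\<lambda>x. n < x)"] filter_flat[OF assms(1)] filter_flat[OF assms(2)] S S'
    by (metis length_map snd_conv)
  moreover have "length fl = length fl'" using arg_cong[OF fe, of length] calculation S S'
    by (simp add: flat_def)
  ultimately have e1: "pl (rev fl) = pl (rev fl')" and
     e2: "map (\<lambda>e. n - fst e) cl @ map (\<lambda>e. n + snd e) cl = map (\<lambda>e. n - fst e) cl' @ map (\<lambda>e. n + snd e) cl'"
    using fe unfolding S S' flat_def by (simp_all add: append_eq_append_conv)
  have "fl = fl'" using pl_inj[OF e1] by simp
  moreover have "cl = cl'"
  proof (rule nth_equalityI)
    show "length cl = length cl'" by fact
    fix i assume i: "i < length cl"
    have m1: "map (\<lambda>e. n - fst e) cl = map (\<lambda>e. n - fst e) cl'" and m2: "map (\<lambda>e. n + snd e) cl = map (\<lambda>e. n + snd e) cl'"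
      using e2 \<open>length cl = length cl'\<close> by (simp_all add: append_eq_append_conv)
    have a: "n - fst (cl ! i) = n - fst (cl' ! i)" using arg_cong[OF m1, of "\<lambda>xs. xs ! i"] i \<open>length cl = length cl'\<close> by simp
    have b: "snd (cl ! i) = snd (cl' ! i)" using arg_cong[OF m2, of "\<lambda>xs. xs ! i"] i \<open>length cl = length cl'\<close> by simp
    have "fst (cl ! i) < n" "fst (cl' ! i) < n" using assms(1,2) S S' i \<open>length cl = length cl'\<close>
      by (auto simp: canon_def)
    then show "cl ! i = cl' ! i" using a b by (simp add: prod_eq_iff)
  qed
  ultimately show ?thesis using S S' by simp
qed

lemma card_MS: "card (MS c n d) = card (Canon c n d)"
  unfolding MS_eq
proof (rule card_image, rule inj_onI)
  fix S S' assume "S \<in> Canon c n d" "S' \<in> Canon c n d" "monoS n S = monoS n S'"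
  then show "S = S'" unfolding Canon_def using mono_inj by blast
qed


definition Gset :: "nat \<Rightarrow> nat \<Rightarrow> nat \<Rightarrow> (nat \<times> nat) list set" where
  "Gset c b k = {fl. freeok c fl \<and> length fl = k \<and> (\<forall>p\<in>set fl. snd p \<le> b)}"

definition Gc :: "nat \<Rightarrow> nat \<Rightarrow> nat \<Rightarrow> nat" where
  "Gc c b k = (if b = 0 then 0 else card (Gset c b k))"

definition hda :: "(nat \<times> nat) list \<Rightarrow> nat" where
  "hda cl = (case cl of [] \<Rightarrow> 0 | e # _ \<Rightarrow> fst e)"

definition ChainsL :: "nat \<Rightarrow> nat \<Rightarrow> (nat \<times> nat) list set" where
  "ChainsL c m = {cl. chainok c cl \<and> length cl = m}"

definition Chc :: "nat \<Rightarrow> nat \<Rightarrow> nat \<Rightarrow> nat" where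
  "Chc c a m = card {cl \<in> ChainsL c m. hda cl = a}"

lemma finite_ChainsL: "finite (ChainsL c m)"
proof -
  have "ChainsL c m \<subseteq> {cl. set cl \<subseteq> {..c} \<times> {..c} \<and> length cl = m}"
    unfolding ChainsL_def chainok_def by auto
  moreover have "finite {cl. set cl \<subseteq> {..c} \<times> {..c} \<and> length cl = m}"
    by (rule finite_lists_length_eq) auto
  ultimately show ?thesis by (rule finite_subset)
qed

lemma finite_Gset: "finite (Gset c b k)"
proof -
  have "Gset c b k \<subseteq> {fl. set fl \<subseteq> {..b} \<times> {..b} \<and> length fl = k}"
    unfolding Gset_def freeok_def by fastforce
  moreover have "finite {fl. set fl \<subseteq> {..b} \<times> {..b} \<and> length fl = k}"
    by (rule finite_lists_length_eq) auto
  ultimately show ?thesis by (rule finite_subset)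
qed

lemma hda_max: "chainok c cl \<Longrightarrow> e \<in> set cl \<Longrightarrow> fst e \<le> hda cl"
  by (cases cl) (auto simp: hda_def chainok_def)

lemma hda_le: "chainok c cl \<Longrightarrow> hda cl \<le> c"
  by (cases cl) (auto simp: hda_def chainok_def)

lemma fiber_card:
  assumes n: "1 \<le> n" and cl: "cl \<in> ChainsL c m" and md: "m \<le> d"
  shows "card {fl. (fl, cl) \<in> Canon c n d} = Gc c (n - hda cl) (d - m)"
proof (cases "n - hda cl = 0")
  case True
  then have "cl \<noteq> []" using n by (auto simp: hda_def)
  then obtain e0 r where cl0: "cl = e0 # r" by (cases cl) auto
  have "fst e0 \<ge> n" using True cl0 by (simp add: hda_def)
  then have "{fl. (fl, cl) \<in> Canon c n d} = {}" using cl0 by (auto simp: Canon_def canon_def)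
  then show ?thesis using True by (simp add: Gc_def)
next
  case False
  have co: "chainok c cl" and len: "length cl = m" using cl by (auto simp: ChainsL_def)
  have "{fl. (fl, cl) \<in> Canon c n d} = Gset c (n - hda cl) (d - m)"
  proof (intro set_eqI iffI)
    fix fl assume "fl \<in> {fl. (fl, cl) \<in> Canon c n d}"
    then have can: "canon c n (fl, cl)" "length fl + m = d" using len by (auto simp: Canon_def)
    have "\<forall>p\<in>set fl. snd p \<le> n - hda cl"
    proof
      fix p assume p: "p \<in> set fl"
      show "snd p \<le> n - hda cl"
      proof (cases cl)
        case Nil then show ?thesis using can p by (auto simp: canon_def hda_def)
      next
        case (Cons e0 r)
        then show ?thesis using can p by (auto simp: canon_def hda_def)
      qed
    qed
    then show "fl \<in> Gset c (n - hda cl) (d - m)" using can by (auto simp: Gset_def canon_def)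
  next
    fix fl assume "fl \<in> Gset c (n - hda cl) (d - m)"
    then have g: "freeok c fl" "length fl = d - m" "\<forall>p\<in>set fl. snd p \<le> n - hda cl" by (auto simp: Gset_def)
    have "\<forall>e\<in>set cl. fst e < n \<and> (\<forall>p\<in>set fl. snd p + fst e \<le> n)"
    proof (intro ballI conjI)
      fix e assume e: "e \<in> set cl"
      have "fst e \<le> hda cl" by (rule hda_max[OF co e])
      then show "fst e < n" using False by linarith
      fix p assume "p \<in> set fl"
      then have "snd p \<le> n - hda cl" using g(3) by blast
      then show "snd p + fst e \<le> n" using \<open>fst e \<le> hda cl\<close> False by linarith
    qed
    moreover have "\<forall>p\<in>set fl. snd p \<le> n" using g(3) by fastforce
    ultimately show "fl \<in> {fl. (fl, cl) \<in> Canon c n d}" using g co md len by (auto simp: Canon_def canon_def)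
  qed
  then show ?thesis using False by (simp add: Gc_def)
qed

lemma finite_Canon: "finite (Canon c n d)"
proof -
  have "Canon c n d \<subseteq> {fl. set fl \<subseteq> {..n} \<times> {..n} \<and> length fl \<le> d} \<times> {cl. set cl \<subseteq> {..c} \<times> {..c} \<and> length cl \<le> d}"
  proof
    fix S assume S: "S \<in> Canon c n d"
    obtain fl cl where Se: "S = (fl, cl)" by force
    have "set fl \<subseteq> {..n} \<times> {..n}"
    proof
      fix p assume "p \<in> set fl"
      then have "fst p \<le> snd p" "snd p \<le> n" using S Se by (auto simp: Canon_def canon_def freeok_def)
      then show "p \<in> {..n} \<times> {..n}" by (cases p) auto
    qed
    moreover have "set cl \<subseteq> {..c} \<times> {..c}" using S Se by (auto simp: Canon_def canon_def chainok_def)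
    ultimately show "S \<in> {fl. set fl \<subseteq> {..n} \<times> {..n} \<and> length fl \<le> d} \<times> {cl. set cl \<subseteq> {..c} \<times> {..c} \<and> length cl \<le> d}"
      using S Se by (auto simp: Canon_def)
  qed
  moreover have "finite ({fl. set fl \<subseteq> {..n} \<times> {..n} \<and> length fl \<le> d} \<times> {cl. set cl \<subseteq> {..c} \<times> {..c} \<and> length cl \<le> d})"
    by (intro finite_cartesian_product finite_lists_length_le) auto
  ultimately show ?thesis by (rule finite_subset)
qed

lemma card_Canon:
  assumes n: "1 \<le> n"
  shows "card (Canon c n d) = (\<Sum>m\<le>d. \<Sum>cl\<in>ChainsL c m. Gc c (n - hda cl) (d - m))"
proof -
  let ?CL = "\<Union>m\<le>d. ChainsL c m"
  let ?F = "\<lambda>cl. {fl. (fl, cl) \<in> Canon c n d}"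
  have eq: "Canon c n d = (\<lambda>(cl,fl). (fl,cl)) ` (SIGMA cl:?CL. ?F cl)"
  proof (intro set_eqI iffI)
    fix S assume S: "S \<in> Canon c n d"
    obtain fl cl where Se: "S = (fl, cl)" by force
    have "cl \<in> ?CL" using S Se by (auto simp: Canon_def canon_def ChainsL_def)
    then show "S \<in> (\<lambda>(cl,fl). (fl,cl)) ` (SIGMA cl:?CL. ?F cl)" using S Se by force
  next
    fix S assume "S \<in> (\<lambda>(cl,fl). (fl,cl)) ` (SIGMA cl:?CL. ?F cl)"
    then show "S \<in> Canon c n d" by auto
  qed
  have inj: "inj_on (\<lambda>(cl,fl). (fl,cl)) (SIGMA cl:?CL. ?F cl)" by (auto intro!: inj_onI)
  have finF: "\<And>cl. finite (?F cl)"
  proof -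
    fix cl
    have "?F cl \<subseteq> fst ` Canon c n d" by force
    then show "finite (?F cl)" using finite_Canon[of c n d] by (meson finite_imageI finite_subset)
  qed
  have finCL: "finite ?CL" using finite_ChainsL by auto
  have "card (Canon c n d) = card ((\<lambda>(cl,fl). (fl,cl)) ` (SIGMA cl:?CL. ?F cl))" using eq by (rule arg_cong)
  also have "\<dots> = card (SIGMA cl:?CL. ?F cl)" by (rule card_image[OF inj])
  also have "\<dots> = (\<Sum>cl\<in>?CL. card (?F cl))" by (rule card_SigmaI[OF finCL]) (use finF in auto)
  also have "\<dots> = (\<Sum>m\<le>d. \<Sum>cl\<in>ChainsL c m. card (?F cl))"
    by (rule sum.UNION_disjoint) (use finite_ChainsL in \<open>auto simp: ChainsL_def\<close>)
  also have "\<dots> = (\<Sum>m\<le>d. \<Sum>cl\<in>ChainsL c m. Gc c (n - hda cl) (d - m))"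
    by (intro sum.cong refl fiber_card[OF n]) auto
  finally show ?thesis .
qed

lemma sum_chains_group:
  "(\<Sum>cl\<in>ChainsL c m. Gc c (n - hda cl) k) = (\<Sum>a\<le>n. Chc c a m * Gc c (n - a) k)"
proof -
  let ?T = "{..n + c}"
  have "(\<Sum>cl\<in>ChainsL c m. Gc c (n - hda cl) k) = (\<Sum>a\<in>?T. \<Sum>cl\<in>{cl \<in> ChainsL c m. hda cl = a}. Gc c (n - hda cl) k)"
  proof (rule sum.group[symmetric])
    show "finite (ChainsL c m)" by (rule finite_ChainsL)
    show "finite ?T" by simp
    show "hda ` ChainsL c m \<subseteq> ?T"
    proof
      fix a assume "a \<in> hda ` ChainsL c m"
      then obtain cl where "cl \<in> ChainsL c m" "a = hda cl" by blast
      then have "a \<le> c" using hda_le by (auto simp: ChainsL_def)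
      then show "a \<in> ?T" by simp
    qed
  qed
  also have "\<dots> = (\<Sum>a\<in>?T. Chc c a m * Gc c (n - a) k)"
    by (intro sum.cong refl) (simp add: Chc_def)
  also have "\<dots> = (\<Sum>a\<le>n. Chc c a m * Gc c (n - a) k)"
    by (rule sum.mono_neutral_right) (auto simp: Gc_def)
  finally show ?thesis .
qed

lemma Gset_0: "Gset c b 0 = {[]}"
  by (auto simp: Gset_def freeok_def)

lemma Gc_0: "Gc c b 0 = (if b = 0 then 0 else 1)"
  by (simp add: Gc_def Gset_0)

lemma freeok_Cons: "freeok c (p # r) \<longleftrightarrow> freeok c r \<and> (\<forall>q\<in>set r. snd q \<le> fst p) \<and>
    1 \<le> fst p \<and> fst p \<le> snd p \<and> snd p \<le> fst p + c"
  by (auto simp: freeok_def)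

lemma Gset_Suc: "Gset c (Suc b) (Suc k) = Gset c b (Suc k) \<union>
   (\<Union>l\<in>{l. l \<le> c \<and> l \<le> b}. (\<lambda>r. (Suc b - l, Suc b) # r) ` Gset c (Suc b - l) k)"
proof (intro set_eqI iffI)
  fix fl assume fl: "fl \<in> Gset c (Suc b) (Suc k)"
  then obtain p r where flr: "fl = p # r" by (cases fl) (auto simp: Gset_def)
  have fo: "freeok c r" "\<forall>q\<in>set r. snd q \<le> fst p" "1 \<le> fst p" "fst p \<le> snd p" "snd p \<le> fst p + c"
    and len: "length r = k" and bd: "snd p \<le> Suc b" "\<forall>q\<in>set r. snd q \<le> Suc b"
    using fl flr by (auto simp: Gset_def freeok_Cons)
  show "fl \<in> Gset c b (Suc k) \<union> (\<Union>l\<in>{l. l \<le> c \<and> l \<le> b}. (\<lambda>r. (Suc b - l, Suc b) # r) ` Gset c (Suc b - l) k)"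
  proof (cases "snd p \<le> b")
    case True
    have "\<forall>q\<in>set fl. snd q \<le> b" using True fo(2,4) flr by fastforce
    then show ?thesis using fl by (auto simp: Gset_def)
  next
    case False
    then have sp: "snd p = Suc b" using bd by simp
    define l where "l = Suc b - fst p"
    have l: "l \<le> c" "l \<le> b" "fst p = Suc b - l" using fo sp unfolding l_def by auto
    have "r \<in> Gset c (Suc b - l) k" using fo len l(3) by (auto simp: Gset_def)
    moreover have "fl = (Suc b - l, Suc b) # r" using flr sp l(3) by (cases p) auto
    ultimately show ?thesis using l by blast
  qed
next
  fix fl assume fl: "fl \<in> Gset c b (Suc k) \<union> (\<Union>l\<in>{l. l \<le> c \<and> l \<le> b}. (\<lambda>r. (Suc b - l, Suc b) # r) ` Gset c (Suc b - l) k)"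
  then show "fl \<in> Gset c (Suc b) (Suc k)"
  proof
    assume "fl \<in> Gset c b (Suc k)" then show ?thesis by (auto simp: Gset_def)
  next
    assume "fl \<in> (\<Union>l\<in>{l. l \<le> c \<and> l \<le> b}. (\<lambda>r. (Suc b - l, Suc b) # r) ` Gset c (Suc b - l) k)"
    then obtain l r where l: "l \<le> c" "l \<le> b" and r: "r \<in> Gset c (Suc b - l) k" and fl: "fl = (Suc b - l, Suc b) # r" by blast
    have r': "freeok c r" "length r = k" "\<forall>q\<in>set r. snd q \<le> Suc b - l" using r by (auto simp: Gset_def)
    have "freeok c fl" unfolding fl freeok_Cons using r' l by auto
    moreover have "\<forall>q\<in>set fl. snd q \<le> Suc b" using r' fl by auto
    ultimately show ?thesis using r' fl by (auto simp: Gset_def)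
  qed
qed

lemma Gc_Suc: "Gc c (Suc b) (Suc k) = Gc c b (Suc k) + (\<Sum>l\<le>c. Gc c (Suc b - l) k)"
proof -
  let ?I = "{l. l \<le> c \<and> l \<le> b}"
  let ?U = "\<Union>l\<in>?I. (\<lambda>r. (Suc b - l, Suc b) # r) ` Gset c (Suc b - l) k"
  have A: "card (Gset c b (Suc k)) = Gc c b (Suc k)"
  proof (cases "b = 0")
    case True
    have "Gset c b (Suc k) = {}"
    proof (rule ccontr)
      assume "Gset c b (Suc k) \<noteq> {}"
      then obtain fl where fl: "fl \<in> Gset c b (Suc k)" by blast
      then obtain p r where "fl = p # r" by (cases fl) (auto simp: Gset_def)
      then show False using fl True by (auto simp: Gset_def freeok_def)
    qed
    then show ?thesis using True by (simp add: Gc_def)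
  qed (simp add: Gc_def)
  have disj: "Gset c b (Suc k) \<inter> ?U = {}" by (auto simp: Gset_def)
  have finU: "finite ?U" using finite_Gset by auto
  have cU: "card ?U = (\<Sum>l\<in>?I. card ((\<lambda>r. (Suc b - l, Suc b) # r) ` Gset c (Suc b - l) k))"
    by (rule card_UN_disjoint) (use finite_Gset in auto)
  also have "\<dots> = (\<Sum>l\<in>?I. Gc c (Suc b - l) k)"
  proof (intro sum.cong refl)
    fix l assume "l \<in> ?I"
    then have "Suc b - l \<noteq> 0" by auto
    moreover have "card ((\<lambda>r. (Suc b - l, Suc b) # r) ` Gset c (Suc b - l) k) = card (Gset c (Suc b - l) k)"
      by (rule card_image) (auto intro: inj_onI)
    ultimately show "card ((\<lambda>r. (Suc b - l, Suc b) # r) ` Gset c (Suc b - l) k) = Gc c (Suc b - l) k"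
      by (simp add: Gc_def)
  qed
  also have "\<dots> = (\<Sum>l\<le>c. Gc c (Suc b - l) k)"
    by (rule sum.mono_neutral_left) (auto simp: Gc_def)
  finally have "card ?U = (\<Sum>l\<le>c. Gc c (Suc b - l) k)" .
  moreover have "card (Gset c (Suc b) (Suc k)) = card (Gset c b (Suc k)) + card ?U"
    unfolding Gset_Suc by (rule card_Un_disjoint[OF finite_Gset finU disj])
  ultimately show ?thesis using A by (simp add: Gc_def)
qed

definition Pc :: "nat \<Rightarrow> (nat \<times> nat) set" where
  "Pc c = {e. 1 \<le> snd e \<and> fst e + snd e \<le> c}"

definition Up :: "nat \<Rightarrow> nat \<times> nat \<Rightarrow> (nat \<times> nat) set" where
  "Up c e = {e' \<in> Pc c. fst e' \<le> fst e \<and> snd e \<le> snd e'}"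

definition kc :: "nat \<Rightarrow> nat \<times> nat \<Rightarrow> nat \<Rightarrow> nat" where
  "kc c e m = card {cl \<in> ChainsL c m. cl \<noteq> [] \<and> hd cl = e}"

lemma finite_Pc: "finite (Pc c)"
proof -
  have "Pc c \<subseteq> {..c} \<times> {..c}" by (auto simp: Pc_def)
  then show ?thesis by (rule finite_subset) auto
qed

lemma finite_Up: "finite (Up c e)"
  using finite_Pc by (auto simp: Up_def)

lemma chainok_Cons: "chainok c (e # cl) \<longleftrightarrow> e \<in> Pc c \<and> (\<forall>x\<in>set cl. fst x \<le> fst e \<and> snd e \<le> snd x) \<and> chainok c cl"
  by (auto simp: chainok_def Pc_def)

lemma chainok_Cons2: "chainok c (e # e' # r) \<longleftrightarrow> e \<in> Pc c \<and> e' \<in> Up c e \<and> chainok c (e' # r)"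
proof
  assume h: "chainok c (e # e' # r)"
  then show "e \<in> Pc c \<and> e' \<in> Up c e \<and> chainok c (e' # r)"
    unfolding chainok_Cons[of c e] by (auto simp: Up_def chainok_Cons)
next
  assume h: "e \<in> Pc c \<and> e' \<in> Up c e \<and> chainok c (e' # r)"
  then have "\<forall>x\<in>set r. fst x \<le> fst e' \<and> snd e' \<le> snd x" by (simp add: chainok_Cons)
  then have "\<forall>x\<in>set (e' # r). fst x \<le> fst e \<and> snd e \<le> snd x" using h by (auto simp: Up_def)
  then show "chainok c (e # e' # r)" using h by (simp only: chainok_Cons[of c e])
qed

lemma kc_0: "kc c e 0 = 0"
  by (simp add: kc_def ChainsL_def)

lemma kc_1: "kc c e (Suc 0) = (if e \<in> Pc c then 1 else 0)"
proof -
  have "{cl \<in> ChainsL c (Suc 0). cl \<noteq> [] \<and> hd cl = e} = (if e \<in> Pc c then {[e]} else {})"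
    by (auto simp: ChainsL_def chainok_Cons length_Suc_conv chainok_def[of c "[]"])
  then show ?thesis by (simp add: kc_def)
qed

lemma kc_SS: "kc c e (Suc (Suc m)) = (if e \<in> Pc c then (\<Sum>e'\<in>Up c e. kc c e' (Suc m)) else 0)"
proof -
  let ?S = "{cl \<in> ChainsL c (Suc (Suc m)). cl \<noteq> [] \<and> hd cl = e}"
  let ?T = "\<lambda>e'. {cl \<in> ChainsL c (Suc m). cl \<noteq> [] \<and> hd cl = e'}"
  show ?thesis
  proof (cases "e \<in> Pc c")
    case False
    then have "?S = {}" by (auto simp: ChainsL_def neq_Nil_conv chainok_Cons)
    then show ?thesis using False unfolding kc_def by (simp only: card.empty) simp
  next
    case True
    have eq: "?S = (\<Union>e'\<in>Up c e. (\<lambda>cl. e # cl) ` ?T e')"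
    proof (intro set_eqI iffI)
      fix cl assume cl: "cl \<in> ?S"
      then obtain r where r: "cl = e # r" "length r = Suc m" by (auto simp: ChainsL_def neq_Nil_conv)
      then obtain e' r' where r': "r = e' # r'" by (cases r) auto
      have "chainok c (e # e' # r')" using cl r r' by (simp add: ChainsL_def)
      then have "e' \<in> Up c e" "chainok c (e' # r')" by (simp_all add: chainok_Cons2)
      moreover have "e' # r' \<in> ?T e'" using \<open>chainok c (e' # r')\<close> r r' by (simp add: ChainsL_def)
      ultimately show "cl \<in> (\<Union>e'\<in>Up c e. (\<lambda>cl. e # cl) ` ?T e')" using r r' by blast
    next
      fix cl assume "cl \<in> (\<Union>e'\<in>Up c e. (\<lambda>cl. e # cl) ` ?T e')"
      then obtain e' r where "e' \<in> Up c e" "r \<in> ?T e'" "cl = e # r" by blast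
      then obtain r' where "r = e' # r'" "chainok c (e' # r')" "length r = Suc m" "e' \<in> Up c e" "cl = e # r"
        by (auto simp: ChainsL_def neq_Nil_conv)
      then show "cl \<in> ?S" using True by (auto simp: ChainsL_def chainok_Cons2)
    qed
    have "card ?S = (\<Sum>e'\<in>Up c e. card ((\<lambda>cl. e # cl) ` ?T e'))"
      unfolding eq by (rule card_UN_disjoint) (use finite_Up finite_ChainsL in auto)
    also have "\<dots> = (\<Sum>e'\<in>Up c e. kc c e' (Suc m))"
      by (intro sum.cong refl) (simp add: kc_def card_image inj_on_def)
    finally show ?thesis using True by (simp add: kc_def)
  qed
qed

lemma Chc_0: "Chc c a 0 = (if a = 0 then 1 else 0)"
proof -
  have "{cl \<in> ChainsL c 0. hda cl = a} = (if a = 0 then {[]} else {})"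
    by (auto simp: ChainsL_def hda_def chainok_def)
  then show ?thesis by (simp add: Chc_def)
qed

lemma Chc_Suc: "Chc c a (Suc m) = (\<Sum>b\<le>c. kc c (a, b) (Suc m))"
proof -
  let ?S = "{cl \<in> ChainsL c (Suc m). hda cl = a}"
  let ?T = "\<lambda>b. {cl \<in> ChainsL c (Suc m). cl \<noteq> [] \<and> hd cl = (a, b)}"
  have eq: "?S = (\<Union>b\<le>c. ?T b)"
  proof (intro set_eqI iffI)
    fix cl assume cl: "cl \<in> ?S"
    then obtain e r where er: "cl = e # r" by (cases cl) (auto simp: ChainsL_def)
    have "snd e \<le> c" using cl er by (auto simp: ChainsL_def chainok_def)
    moreover have "fst e = a" using cl er by (simp add: hda_def)
    ultimately show "cl \<in> (\<Union>b\<le>c. ?T b)" using cl er by (cases e) auto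
  next
    fix cl assume "cl \<in> (\<Union>b\<le>c. ?T b)"
    then show "cl \<in> ?S" by (auto simp: hda_def neq_Nil_conv)
  qed
  have "card ?S = (\<Sum>b\<le>c. card (?T b))"
    unfolding eq by (rule card_UN_disjoint) (use finite_ChainsL in auto)
  then show ?thesis by (simp add: Chc_def kc_def)
qed


abbreviation cf :: "'a fps \<Rightarrow> nat \<Rightarrow> 'a" where "cf f n \<equiv> fps_nth f n"

definition FF :: "(nat \<Rightarrow> nat \<Rightarrow> nat) \<Rightarrow> rat fps fps" where
  "FF A = Abs_fps (\<lambda>n. Abs_fps (\<lambda>d. of_nat (A n d)))"

lemma FF_nth[simp]: "cf (cf (FF A) n) d = of_nat (A n d)"
  by (simp add: FF_def)

definition Tt :: "rat fps fps" where "Tt = fps_const fps_X"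

definition PX :: "nat \<Rightarrow> rat fps fps" where "PX c = (\<Sum>l\<le>c. fps_X ^ l)"

lemma coeff_main:
  "cf (cf ((1 - fps_X - Tt * PX c) * FF A) n) d = of_nat (A n d) - (if n = 0 then 0 else of_nat (A (n-1) d))
     - (if d = 0 then 0 else (\<Sum>l\<le>c. if l \<le> n then of_nat (A (n-l) (d-1)) else 0))"
proof -
  have e: "(1 - fps_X - Tt * PX c) * FF A = FF A - fps_X * FF A - fps_const fps_X * (PX c * FF A)"
    by (simp add: algebra_simps Tt_def)
  have p: "cf (PX c * FF A) n = (\<Sum>l\<le>c. if l \<le> n then cf (FF A) (n - l) else 0)"
    unfolding PX_def sum_distrib_right fps_sum_nth fps_X_power_mult_nth
    by (intro sum.cong refl) auto
  have p2: "cf (cf (PX c * FF A) n) j = (\<Sum>l\<le>c. if l \<le> n then of_nat (A (n-l) j) else 0)" for j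
    unfolding p fps_sum_nth by (intro sum.cong refl) auto
  show ?thesis
    unfolding e fps_sub_nth fps_mult_left_const_nth fps_X_mult_nth
    by (cases d) (auto simp: p2 cong: if_cong)
qed

lemma G_eq: "(1 - fps_X - Tt * PX c) * FF (Gc c) = fps_X"
proof (intro fps_ext)
  fix n d
  show "cf (cf ((1 - fps_X - Tt * PX c) * FF (Gc c)) n) d = cf (cf (fps_X :: rat fps fps) n) d"
  proof (cases n)
    case 0
    then show ?thesis unfolding coeff_main by (simp add: Gc_def)
  next
    case (Suc b)
    show ?thesis
    proof (cases d)
      case 0
      then show ?thesis unfolding coeff_main using Suc by (simp add: Gc_0)
    next
      case (Suc k)
      have "cf (cf ((1 - fps_X - Tt * PX c) * FF (Gc c)) n) d = of_nat (Gc c (Suc b) (Suc k)) - of_nat (Gc c b (Suc k))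
           - (\<Sum>l\<le>c. if l \<le> Suc b then (of_nat (Gc c (Suc b - l) k) :: rat) else 0)"
        unfolding coeff_main using \<open>n = Suc b\<close> Suc by (simp cong: if_cong)
      also have "(\<Sum>l\<le>c. if l \<le> Suc b then (of_nat (Gc c (Suc b - l) k) :: rat) else 0) = (\<Sum>l\<le>c. of_nat (Gc c (Suc b - l) k))"
        by (intro sum.cong refl) (auto simp: Gc_def)
      also have "of_nat (Gc c (Suc b) (Suc k)) - of_nat (Gc c b (Suc k)) - \<dots> = (0::rat)"
        unfolding Gc_Suc by simp
      finally show ?thesis using \<open>n = Suc b\<close> Suc by simp
    qed
  qed
qed

definition Kf :: "nat \<Rightarrow> nat \<times> nat \<Rightarrow> rat fps" where
  "Kf c e = Abs_fps (\<lambda>m. of_nat (kc c e m))"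

lemma Kf_eq: "e \<in> Pc c \<Longrightarrow> Kf c e = fps_X * (1 + (\<Sum>e'\<in>Up c e. Kf c e'))"
proof (intro fps_ext)
  fix m assume e: "e \<in> Pc c"
  show "cf (Kf c e) m = cf (fps_X * (1 + (\<Sum>e'\<in>Up c e. Kf c e'))) m"
  proof (cases m)
    case 0 then show ?thesis by (simp add: Kf_def kc_0)
  next
    case (Suc m')
    show ?thesis
    proof (cases m')
      case 0 then show ?thesis using Suc e by (simp add: Kf_def kc_0 kc_1 fps_sum_nth)
    next
      case (Suc m'')
      then show ?thesis using \<open>m = Suc m'\<close> e by (simp add: Kf_def kc_SS fps_sum_nth)
    qed
  qed
qed

lemma Kf_notP: "e \<notin> Pc c \<Longrightarrow> Kf c e = 0"
proof (intro fps_ext)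
  fix m assume e: "e \<notin> Pc c"
  show "cf (Kf c e) m = cf 0 m"
  proof (cases m)
    case 0 then show ?thesis by (simp add: Kf_def kc_0)
  next
    case (Suc m')
    then show ?thesis using e by (cases m') (simp_all add: Kf_def kc_1 kc_SS)
  qed
qed

definition ispoly :: "rat fps \<Rightarrow> bool" where
  "ispoly f \<longleftrightarrow> (\<exists>p. f = fps_of_poly p)"

lemma ispoly_add: "ispoly f \<Longrightarrow> ispoly g \<Longrightarrow> ispoly (f + g)"
  unfolding ispoly_def by (metis fps_of_poly_add)
lemma ispoly_mult: "ispoly f \<Longrightarrow> ispoly g \<Longrightarrow> ispoly (f * g)"
  unfolding ispoly_def by (metis fps_of_poly_mult)
lemma ispoly_diff: "ispoly f \<Longrightarrow> ispoly g \<Longrightarrow> ispoly (f - g)"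
  unfolding ispoly_def by (metis fps_of_poly_diff)
lemma ispoly_0: "ispoly 0" unfolding ispoly_def by (metis fps_of_poly_0)
lemma ispoly_1: "ispoly 1" unfolding ispoly_def by (metis fps_of_poly_1)
lemma ispoly_X: "ispoly fps_X" unfolding ispoly_def by (metis fps_of_poly_fps_X)
lemma ispoly_power: "ispoly f \<Longrightarrow> ispoly (f ^ k)"
  by (induction k) (auto intro: ispoly_mult ispoly_1)
lemma ispoly_sum: "(\<And>x. x \<in> A \<Longrightarrow> ispoly (f x)) \<Longrightarrow> ispoly (sum f A)"
  by (induction A rule: infinite_finite_induct) (auto intro: ispoly_add ispoly_0)

definition mu :: "nat \<Rightarrow> nat \<times> nat \<Rightarrow> nat" where
  "mu c e = fst e + (c - snd e)"

lemma Up_self: "e \<in> Pc c \<Longrightarrow> e \<in> Up c e" by (simp add: Up_def)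

lemma mu_less: "e \<in> Pc c \<Longrightarrow> e' \<in> Up c e - {e} \<Longrightarrow> mu c e' < mu c e"
  by (cases e; cases e') (auto simp: Up_def Pc_def mu_def)

lemma mu_le: "e \<in> Pc c \<Longrightarrow> mu c e \<le> 2 * c"
  by (auto simp: Pc_def mu_def)

lemma Kpoly: "e \<in> Pc c \<Longrightarrow> ispoly ((1 - fps_X) ^ (mu c e + 1) * Kf c e)"
proof (induction "mu c e" arbitrary: e rule: less_induct)
  case less
  let ?U = "Up c e - {e}"
  have fU: "finite (Up c e)" by (rule finite_Up)
  have "Kf c e = fps_X * (1 + (Kf c e + (\<Sum>e'\<in>?U. Kf c e')))"
  proof -
    have s: "sum (Kf c) (Up c e) = Kf c e + sum (Kf c) ?U" by (rule sum.remove[OF fU Up_self[OF less.prems]])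
    show ?thesis using Kf_eq[OF less.prems] unfolding s .
  qed
  then have k1: "(1 - fps_X) * Kf c e = fps_X * (1 + (\<Sum>e'\<in>?U. Kf c e'))"
    by (simp add: algebra_simps)
  have "(1 - fps_X) ^ (mu c e + 1) * Kf c e = (1 - fps_X) ^ mu c e * ((1 - fps_X) * Kf c e)"
    by (simp add: algebra_simps)
  also have "\<dots> = fps_X * (1 - fps_X) ^ mu c e + (\<Sum>e'\<in>?U. fps_X * (1 - fps_X) ^ (mu c e - mu c e' - 1) * ((1 - fps_X) ^ (mu c e' + 1) * Kf c e'))"
  proof -
    have "(1 - fps_X) ^ mu c e * Kf c e' = (1 - fps_X) ^ (mu c e - mu c e' - 1) * ((1 - fps_X) ^ (mu c e' + 1) * Kf c e')"
      if "e' \<in> ?U" for e'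
    proof -
      have "mu c e = (mu c e - mu c e' - 1) + (mu c e' + 1)" using mu_less[OF less.prems that] by simp
      then have "(1 - fps_X :: rat fps) ^ mu c e = (1 - fps_X) ^ (mu c e - mu c e' - 1) * (1 - fps_X) ^ (mu c e' + 1)"
        by (metis power_add)
      then show ?thesis by (simp add: mult.assoc)
    qed
    note pt = this
    have "(1 - fps_X) ^ mu c e * (fps_X * (1 + (\<Sum>e'\<in>?U. Kf c e'))) = fps_X * (1 - fps_X) ^ mu c e + (\<Sum>e'\<in>?U. fps_X * ((1 - fps_X) ^ mu c e * Kf c e'))"
      by (simp add: distrib_left sum_distrib_left mult_ac)
    also have "\<dots> = fps_X * (1 - fps_X) ^ mu c e + (\<Sum>e'\<in>?U. fps_X * (1 - fps_X) ^ (mu c e - mu c e' - 1) * ((1 - fps_X) ^ (mu c e' + 1) * Kf c e'))"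
      by (intro arg_cong2[where f="(+)"] refl sum.cong) (simp_all add: pt mult.assoc)
    finally show ?thesis unfolding k1 .
  qed
  finally have eq: "(1 - fps_X) ^ (mu c e + 1) * Kf c e = \<dots>" .
  have "\<And>e'. e' \<in> ?U \<Longrightarrow> ispoly ((1 - fps_X) ^ (mu c e' + 1) * Kf c e')"
  proof -
    fix e' assume e': "e' \<in> ?U"
    then have "e' \<in> Pc c" by (auto simp: Up_def)
    then show "ispoly ((1 - fps_X) ^ (mu c e' + 1) * Kf c e')" using less.hyps[OF mu_less[OF less.prems e']] by blast
  qed
  note IHp = this
  have b1: "ispoly (1 - fps_X)" by (rule ispoly_diff[OF ispoly_1 ispoly_X])
  show ?case unfolding eq
  proof (rule ispoly_add)
    show "ispoly (fps_X * (1 - fps_X) ^ mu c e)" by (rule ispoly_mult[OF ispoly_X ispoly_power[OF b1]])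
    show "ispoly (\<Sum>e'\<in>?U. fps_X * (1 - fps_X) ^ (mu c e - mu c e' - 1) * ((1 - fps_X) ^ (mu c e' + 1) * Kf c e'))"
    proof (rule ispoly_sum)
      fix e' assume e': "e' \<in> ?U"
      show "ispoly (fps_X * (1 - fps_X) ^ (mu c e - mu c e' - 1) * ((1 - fps_X) ^ (mu c e' + 1) * Kf c e'))"
        by (rule ispoly_mult[OF ispoly_mult[OF ispoly_X ispoly_power[OF b1]] IHp[OF e']])
    qed
  qed
qed

lemma Kpoly_uniform: "ispoly ((1 - fps_X) ^ (2 * c + 1) * Kf c e)"
proof (cases "e \<in> Pc c")
  case False then show ?thesis by (simp add: Kf_notP ispoly_0)
next
  case True
  have "2 * c + 1 = (2 * c - mu c e) + (mu c e + 1)" using mu_le[OF True] by simp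
  then have "(1 - fps_X :: rat fps) ^ (2 * c + 1) = (1 - fps_X) ^ (2 * c - mu c e) * (1 - fps_X) ^ (mu c e + 1)"
    by (metis power_add)
  then have "(1 - fps_X) ^ (2 * c + 1) * Kf c e = (1 - fps_X) ^ (2 * c - mu c e) * ((1 - fps_X) ^ (mu c e + 1) * Kf c e)"
    by (simp add: mult.assoc)
  then show ?thesis using Kpoly[OF True]
    by (metis ispoly_mult ispoly_power ispoly_diff ispoly_1 ispoly_X)
qed

definition Rf :: "nat \<Rightarrow> nat \<Rightarrow> rat fps" where
  "Rf c a = Abs_fps (\<lambda>m. of_nat (Chc c a m))"

lemma Rf_eq: "Rf c a = (if a = 0 then 1 else 0) + (\<Sum>b\<le>c. Kf c (a, b))"
proof (intro fps_ext)
  fix m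
  show "cf (Rf c a) m = cf ((if a = 0 then 1 else 0) + (\<Sum>b\<le>c. Kf c (a, b))) m"
    by (cases m) (simp_all add: Rf_def Chc_0 Chc_Suc Kf_def kc_0 fps_sum_nth)
qed

abbreviation NN :: "nat \<Rightarrow> nat" where "NN c \<equiv> 2 * c + 1"

lemma Rf_poly: "ispoly ((1 - fps_X) ^ NN c * Rf c a)"
proof -
  have "(1 - fps_X) ^ NN c * Rf c a = (1 - fps_X) ^ NN c * (if a = 0 then 1 else 0) + (\<Sum>b\<le>c. (1 - fps_X) ^ NN c * Kf c (a, b))"
    unfolding Rf_eq by (simp add: distrib_left sum_distrib_left)
  moreover have "ispoly ((1 - fps_X :: rat fps) ^ NN c * (if a = 0 then 1 else 0))"
    by (intro ispoly_mult ispoly_power ispoly_diff ispoly_1 ispoly_X) (simp add: ispoly_1 ispoly_0)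
  moreover have "ispoly (\<Sum>b\<le>c. (1 - fps_X) ^ NN c * Kf c (a, b))"
    by (intro ispoly_sum Kpoly_uniform)
  ultimately show ?thesis by (metis ispoly_add)
qed

lemma Chc_big: "c < a \<Longrightarrow> Chc c a m = 0"
proof -
  assume a: "c < a"
  have "{cl \<in> ChainsL c m. hda cl = a} = {}" using a hda_le by (force simp: ChainsL_def)
  then show ?thesis unfolding Chc_def by (metis card.empty)
qed

lemma FF_Chc: "FF (Chc c) = (\<Sum>a\<le>c. fps_X ^ a * fps_const (Rf c a))"
proof (intro fps_ext)
  fix n m
  have "cf (\<Sum>a\<le>c. fps_X ^ a * fps_const (Rf c a)) n = (\<Sum>a\<le>c. if a = n then Rf c a else 0)"
    unfolding fps_sum_nth fps_X_power_mult_nth by (intro sum.cong refl) auto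
  also have "\<dots> = (if n \<le> c then Rf c n else 0)" by (simp add: sum.delta)
  finally have "cf (\<Sum>a\<le>c. fps_X ^ a * fps_const (Rf c a)) n = (if n \<le> c then Rf c n else 0)" .
  then show "cf (cf (FF (Chc c)) n) m = cf (cf (\<Sum>a\<le>c. fps_X ^ a * fps_const (Rf c a)) n) m"
    by (auto simp: Rf_def Chc_big)
qed

definition poly2 :: "rat fps fps \<Rightarrow> bool" where
  "poly2 F \<longleftrightarrow> (\<exists>N. \<forall>i j. (N < i \<or> N < j) \<longrightarrow> cf (cf F i) j = 0)"

lemma poly2_row: "poly2 F \<Longrightarrow> \<exists>N. (\<forall>i. N < i \<longrightarrow> cf F i = 0) \<and> (\<forall>i j. N < j \<longrightarrow> cf (cf F i) j = 0)"
  unfolding poly2_def by (metis fps_ext fps_zero_nth)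

lemma poly2_add: "poly2 F \<Longrightarrow> poly2 G \<Longrightarrow> poly2 (F + G)"
  unfolding poly2_def by (metis (no_types, opaque_lifting) add.right_neutral fps_add_nth max.strict_boundedE)

lemma poly2_mult: "poly2 F \<Longrightarrow> poly2 G \<Longrightarrow> poly2 (F * G)"
proof -
  assume F: "poly2 F" and G: "poly2 G"
  obtain NF where NF: "\<And>i. NF < i \<Longrightarrow> cf F i = 0" "\<And>i j. NF < j \<Longrightarrow> cf (cf F i) j = 0" using poly2_row[OF F] by blast
  obtain NG where NG: "\<And>i. NG < i \<Longrightarrow> cf G i = 0" "\<And>i j. NG < j \<Longrightarrow> cf (cf G i) j = 0" using poly2_row[OF G] by blast
  have "cf (cf (F * G) i) j = 0" if ij: "NF + NG < i \<or> NF + NG < j" for i j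
  proof -
    have "cf (cf (F * G) i) j = (\<Sum>a=0..i. \<Sum>b=0..j. cf (cf F a) b * cf (cf G (i - a)) (j - b))"
      by (simp add: fps_mult_nth fps_sum_nth)
    also have "\<dots> = 0"
    proof (intro sum.neutral ballI)
      fix a b assume a: "a \<in> {0..i}" and b: "b \<in> {0..j}"
      show "cf (cf F a) b * cf (cf G (i - a)) (j - b) = 0"
      proof (cases "NF + NG < i")
        case True
        then have "NF < a \<or> NG < i - a" using a by auto
        then show ?thesis using NF(1) NG(1) by auto
      next
        case False
        then have "NF + NG < j" using ij by simp
        then have "NF < b \<or> NG < j - b" using b by auto
        then show ?thesis using NF(2) NG(2) by auto
      qed
    qed
    finally show ?thesis .
  qed
  then show ?thesis unfolding poly2_def by blast
qed

lemma poly2_const: "ispoly f \<Longrightarrow> poly2 (fps_const f)"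
proof -
  assume "ispoly f"
  then obtain p where p: "f = fps_of_poly p" by (auto simp: ispoly_def)
  have "cf (cf (fps_const f) i) j = 0" if "degree p < i \<or> degree p < j" for i j
    using that p by (auto simp: coeff_eq_0)
  then show ?thesis unfolding poly2_def by blast
qed

lemma poly2_X: "poly2 fps_X"
  unfolding poly2_def by (rule exI[of _ 1]) auto

lemma poly2_1: "poly2 1"
  unfolding poly2_def by (rule exI[of _ 0]) auto

lemma poly2_power: "poly2 F \<Longrightarrow> poly2 (F ^ k)"
  by (induction k) (auto intro: poly2_mult poly2_1)

lemma poly2_0: "poly2 0"
  unfolding poly2_def by auto

lemma poly2_sum: "(\<And>x. x \<in> A \<Longrightarrow> poly2 (f x)) \<Longrightarrow> poly2 (sum f A)"
  by (induction A rule: infinite_finite_induct) (auto intro: poly2_add poly2_0)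

lemma poly2_diff: "poly2 F \<Longrightarrow> poly2 G \<Longrightarrow> poly2 (F - G)"
  unfolding poly2_def by (metis (no_types, opaque_lifting) diff_zero fps_sub_nth max.strict_boundedE)

lemma rb_intro:
  assumes Q: "poly2 Q" and P: "poly2 P" and Q0: "Q \<noteq> 0"
    and eq: "Q * Abs_fps (\<lambda>n. Abs_fps (\<lambda>d. H n d)) = P"
  shows "rational_bivariate H"
proof -
  obtain N1 where N1: "\<forall>i j. (N1 < i \<or> N1 < j) \<longrightarrow> cf (cf Q i) j = 0" using Q by (auto simp: poly2_def)
  obtain N2 where N2: "\<forall>i j. (N2 < i \<or> N2 < j) \<longrightarrow> cf (cf P i) j = 0" using P by (auto simp: poly2_def)
  obtain i where "cf Q i \<noteq> 0" using Q0 by (metis fps_ext fps_zero_nth)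
  then obtain j where ij: "cf (cf Q i) j \<noteq> 0" by (metis fps_ext fps_zero_nth)
  have conv: "(\<Sum>i\<le>n. \<Sum>j\<le>d. cf (cf Q i) j * H (n - i) (d - j)) = cf (cf P n) d" for n d
  proof -
    have "cf (cf P n) d = cf (cf (Q * Abs_fps (\<lambda>n. Abs_fps (\<lambda>d. H n d))) n) d" using eq by simp
    also have "\<dots> = (\<Sum>i=0..n. \<Sum>j=0..d. cf (cf Q i) j * H (n - i) (d - j))"
      by (simp add: fps_mult_nth fps_sum_nth)
    finally show ?thesis by (simp add: atLeast0AtMost)
  qed
  show ?thesis unfolding rational_bivariate_def
    by (rule exI[of _ "\<lambda>i j. cf (cf P i) j"], rule exI[of _ "\<lambda>i j. cf (cf Q i) j"], rule exI[of _ "max N1 N2"])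
       (use N1 N2 ij conv in auto)
qed

lemma Hcoef:
  "(if 1 \<le> n then of_nat (dimK (gradedA c n d :: 'k::field mpoly set)) else 0) = cf (cf (FF (Chc c) * FF (Gc c)) n) d"
proof -
  have R: "cf (cf (FF (Chc c) * FF (Gc c)) n) d = (\<Sum>i\<le>n. \<Sum>j\<le>d. of_nat (Chc c i j) * of_nat (Gc c (n - i) (d - j)))"
    by (simp add: fps_mult_nth fps_sum_nth atLeast0AtMost)
  show ?thesis
  proof (cases "1 \<le> n")
    case False
    then have "n = 0" by simp
    then show ?thesis unfolding R by (simp add: Gc_def)
  next
    case True
    have fin: "finite (MS c n d)" unfolding MS_eq by (intro finite_imageI finite_Canon)
    have "dimK (gradedA c n d :: 'k mpoly set) = card (Canon c n d)"
      by (simp add: dimK_gradedA[OF fin] card_MS)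
    also have "\<dots> = (\<Sum>m\<le>d. \<Sum>a\<le>n. Chc c a m * Gc c (n - a) (d - m))"
      unfolding card_Canon[OF True] sum_chains_group ..
    finally have "(of_nat (dimK (gradedA c n d :: 'k mpoly set)) :: rat) = (\<Sum>m\<le>d. \<Sum>a\<le>n. of_nat (Chc c a m) * of_nat (Gc c (n - a) (d - m)))"
      by simp
    also have "\<dots> = (\<Sum>a\<le>n. \<Sum>m\<le>d. of_nat (Chc c a m) * of_nat (Gc c (n - a) (d - m)))"
      by (rule sum.swap)
    finally show ?thesis using True unfolding R by simp
  qed
qed

theorem main_result:
  fixes c :: nat
  shows "rational_bivariate
           (\<lambda>n d. if 1 \<le> n then of_nat (dimK (gradedA c n d :: 'k::field mpoly set)) else 0)"
proof -
  define H where "H = (\<lambda>n d. if 1 \<le> n then of_nat (dimK (gradedA c n d :: 'k::field mpoly set)) else (0::rat))"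
  define C0 :: "rat fps fps" where "C0 = fps_const ((1 - fps_X) ^ NN c)"
  define Q where "Q = C0 * (1 - fps_X - Tt * PX c)"
  define P where "P = (\<Sum>a\<le>c. fps_X ^ a * fps_const ((1 - fps_X) ^ NN c * Rf c a)) * fps_X"
  have HF: "Abs_fps (\<lambda>n. Abs_fps (\<lambda>d. H n d)) = FF (Chc c) * FF (Gc c)"
    by (intro fps_ext) (simp only: H_def fps_nth_Abs_fps Hcoef)
  have C0F: "C0 * FF (Chc c) = (\<Sum>a\<le>c. fps_X ^ a * fps_const ((1 - fps_X) ^ NN c * Rf c a))"
    unfolding FF_Chc C0_def sum_distrib_left by (intro sum.cong refl) (simp add: mult_ac fps_const_mult[symmetric] del: fps_const_mult)
  have "Q * Abs_fps (\<lambda>n. Abs_fps (\<lambda>d. H n d)) = (C0 * FF (Chc c)) * ((1 - fps_X - Tt * PX c) * FF (Gc c))"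
    unfolding Q_def HF by (simp add: mult_ac)
  also have "\<dots> = P" unfolding G_eq C0F P_def ..
  finally have eq: "Q * Abs_fps (\<lambda>n. Abs_fps (\<lambda>d. H n d)) = P" .
  have pb: "ispoly (1 - fps_X)" by (rule ispoly_diff[OF ispoly_1 ispoly_X])
  have pQ: "poly2 Q" unfolding Q_def C0_def Tt_def PX_def
    by (intro poly2_mult poly2_const ispoly_power pb poly2_diff poly2_1 poly2_X ispoly_X poly2_sum poly2_power)
  have pP: "poly2 P" unfolding P_def
    by (intro poly2_mult poly2_sum poly2_power poly2_X poly2_const Rf_poly)
  have "cf (1 - fps_X :: rat fps) 0 = 1" by simp
  then have "(1 - fps_X :: rat fps) \<noteq> 0" by (metis fps_zero_nth one_neq_zero)
  then have "(1 - fps_X :: rat fps) ^ NN c \<noteq> 0" by simp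
  then have C0nz: "C0 \<noteq> 0" unfolding C0_def by (metis fps_nth_fps_const fps_zero_nth)
  have "cf (cf (1 - fps_X - Tt * PX c) 0) 0 = 1" by (simp add: Tt_def)
  then have "1 - fps_X - Tt * PX c \<noteq> 0" by (metis fps_zero_nth one_neq_zero)
  then have Qnz: "Q \<noteq> 0" unfolding Q_def using C0nz by simp
  have "rational_bivariate H" by (rule rb_intro[OF pQ pP Qnz eq])
  then show ?thesis unfolding H_def .
qed

theorem theorem5p3:
  fixes c :: nat
  shows "rational_bivariate
           (\<lambda>n d. if 1 \<le> n then of_nat (dimK (gradedA c n d :: 'k::field mpoly set)) else 0)"
  by (rule main_result)

end
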